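(* Let $\lambda$ be a partition with $d$ distinct part sizes and parameters $(h_1,\dots,h_d)$, $(v_1,\dots,v_d)$. Put $x_i=h_{1,i}$, $y_i=v_{1,i}$ for $1\le i\le d$ and $x_0=y_0=0$. Then for $0\le s\le d$, \[ p_{0,s}=\frac{\prod_{i=1}^d(q^{x_s}t^{y_s}-q^{x_{i-1}}t^{y_i})}{\prod_{i=0,i\ne s}^d(q^{x_s}t^{y_s}-q^{x_i}t^{y_i})},\qquad \overline{p}_{0,s}=\frac{\prod_{i=1}^d(q^{x_s-1}t^{y_s+1}-q^{x_{i-1}}t^{y_i})}{\prod_{i=0,i\ne s}^d(q^{x_s-1}t^{y_s+1}-q^{x_i}t^{y_i})}, \] and for $1\le r\le d$, \[ p_{r,s}=\prod_{i=0,i\ne s}^d\frac{q^{x_{r-1}+1}t^{y_r-1}-q^{x_i}t^{y_i}}{q^{x_s}t^{y_s}-q^{x_i}t^{y_i}}\prod_{i=1,i\ne r}^d\frac{q^{x_s}t^{y_s}-q^{x_{i-1}}t^{y_i}}{q^{x_{r-1}+1}t^{y_r-1}-q^{x_{i-1}}t^{y_i}}, \] \[ \overline{p}_{r,s}=\prod_{i=0,i\ne s}^d\frac{q^{x_{r-1}}t^{y_r}-q^{x_i}t^{y_i}}{q^{x_s-1}t^{y_s+1}-q^{x_i}t^{y_i}}\prod_{i=1,i\ne r}^d\frac{q^{x_s-1}t^{y_s+1}-q^{x_{i-1}}t^{y_i}}{q^{x_{r-1}}t^{y_r}-q^{x_{i-1}}t^{y_i}}. \]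
   Context: Partitions are Young diagrams in French convention (cells $(x,y)\in\mathbb{Z}_{>0}^2$, $x\le\lambda_y$), $\lambda'$ the conjugate; for $c=(x,y)\in\lambda$, $a_\lambda(c)=\lambda_y-x$, $\ell_\lambda(c)=\lambda'_x-y$; $n(\kappa)=\sum_{c\in\kappa}\ell_\kappa(c)$, $n'(\kappa)=\sum_{c\in\kappa}a_\kappa(c)$, $n(\rho/\kappa)=n(\rho)-n(\kappa)$, $n'(\rho/\kappa)=n'(\rho)-n'(\kappa)$. For $\kappa\subseteq\rho$, $\mathcal{R}_{\rho/\kappa}$ (resp. $\mathcal{C}_{\rho/\kappa}$): cells of $\kappa$ in a row (resp. column) containing a cell of $\rho/\kappa$. $[i,j]=1-q^it^j$. For $\kappa\lessdot\rho$ (one-cell difference): $\alpha_{\rho/\kappa}=\prod_{c\in\mathcal{R}_{\rho/\kappa}}\frac{[a_\kappa(c),\ell_\kappa(c)+1]}{[a_\rho(c),\ell_\rho(c)+1]}\prod_{c\in\mathcal{C}_{\rho/\kappa}}\frac{[a_\kappa(c)+1,\ell_\kappa(c)]}{[a_\rho(c)+1,\ell_\rho(c)]}$, $\overline{\alpha}_{\rho/\kappa}=\prod_{c\in\mathcal{R}_{\rho/\kappa}}\frac{[a_\kappa(c)+1,\ell_\kappa(c)]}{[a_\rho(c)+1,\ell_\rho(c)]}\prod_{c\in\mathcal{C}_{\rho/\kappa}}\frac{[a_\kappa(c),\ell_\kappa(c)+1]}{[a_\rho(c),\ell_\rho(c)+1]}$, $\beta=1/\alpha$, $\overline{\beta}=1/\overline{\alpha}$.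 For $\mu\lessdot\lambda\lessdot\nu$, with $A=n'(\lambda/\mu)-n'(\nu/\lambda)$, $B=n(\nu/\lambda)-n(\lambda/\mu)$: $\gamma_{\nu/\lambda/\mu}=\frac{(1-q^At^B)(1-q^{A+1}t^{B-1})}{(1-q)(1-t)}$. Probabilities: $\mathcal{P}_\lambda(\lambda\rightarrow\nu)=t^{n(\nu/\lambda)}\alpha_{\nu/\lambda}$, $\overline{\mathcal{P}}_\lambda(\lambda\leftarrow\nu)=t^{n(\nu/\lambda)}\overline{\alpha}_{\nu/\lambda}$, and for $\mu\lessdot\lambda$: $\mathcal{P}_\lambda(\mu\rightarrow\nu)=t^{B-1}\alpha_{\nu/\lambda}\beta_{\lambda/\mu}/\gamma_{\nu/\lambda/\mu}$, $\overline{\mathcal{P}}_\lambda(\mu\leftarrow\nu)=t^{B-1}\overline{\alpha}_{\nu/\lambda}\overline{\beta}_{\lambda/\mu}/\gamma_{\nu/\lambda/\mu}$. Parameters: if $\lambda$ has distinct part sizes $u_1>\dots>u_d>0$, $v_i$ is the multiplicity of $u_i$ and $h_i=u_i-u_{i+1}$ ($u_{d+1}=0$); $h_{i,j}=h_i+\dots+h_j$, $v_{i,j}=v_i+\dots+v_j$ for $i\le j$. For $0\le s\le d$, $\lambda^{(+s)}$ is obtained by adding a cell in row $v_{1,s}+1$; $\lambda^{(-0)}=\lambda$, and for $1\le r\le d$, $\lambda^{(-r)}$ is obtained by removing a cell from row $v_{1,r}$. $p_{r,s}=\mathcal{P}_\lambda(\lambda^{(-r)}\rightarrow\lambda^{(+s)})$,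 $\overline{p}_{r,s}=\overline{\mathcal{P}}_\lambda(\lambda^{(-r)}\leftarrow\lambda^{(+s)})$. *)

theory Defs
  imports Main
begin

text \<open>A partition is a weakly decreasing list of positive naturals; row y (1-based) has
length prt lam y. Cells are pairs (x,y) with 1 <= x <= lam_y.\<close>

definition is_partition :: "nat list \<Rightarrow> bool" where
  "is_partition lam \<longleftrightarrow> sorted_wrt (\<ge>) lam \<and> (\<forall>p\<in>set lam. 0 < p)"

definition prt :: "nat list \<Rightarrow> nat \<Rightarrow> nat" where
  "prt lam y = (if 0 < y \<and> y \<le> length lam then lam ! (y - 1) else 0)"

definition conjp :: "nat list \<Rightarrow> nat \<Rightarrow> nat" where
  "conjp lam x = card {y. 0 < y \<and> x \<le> prt lam y}"

definition cells :: "nat list \<Rightarrow> (nat \<times> nat) set" where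
  "cells lam = {(x, y). 0 < x \<and> 0 < y \<and> x \<le> prt lam y}"

definition arm :: "nat list \<Rightarrow> nat \<times> nat \<Rightarrow> nat" where
  "arm lam c = prt lam (snd c) - fst c"

definition leg :: "nat list \<Rightarrow> nat \<times> nat \<Rightarrow> nat" where
  "leg lam c = conjp lam (fst c) - snd c"

definition nn :: "nat list \<Rightarrow> nat" where
  "nn lam = (\<Sum>c\<in>cells lam. leg lam c)"

definition nn' :: "nat list \<Rightarrow> nat" where
  "nn' lam = (\<Sum>c\<in>cells lam. arm lam c)"

definition nn_skew :: "nat list \<Rightarrow> nat list \<Rightarrow> int" where
  "nn_skew rho kappa = int (nn rho) - int (nn kappa)"

definition nn'_skew :: "nat list \<Rightarrow> nat list \<Rightarrow> int" where
  "nn'_skew rho kappa = int (nn' rho) - int (nn' kappa)"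

definition Rset :: "nat list \<Rightarrow> nat list \<Rightarrow> (nat \<times> nat) set" where
  "Rset rho kappa = {c \<in> cells kappa. \<exists>c'\<in>cells rho - cells kappa. snd c' = snd c}"

definition Cset :: "nat list \<Rightarrow> nat list \<Rightarrow> (nat \<times> nat) set" where
  "Cset rho kappa = {c \<in> cells kappa. \<exists>c'\<in>cells rho - cells kappa. fst c' = fst c}"

definition mon :: "'a::field \<Rightarrow> 'a \<Rightarrow> int \<Rightarrow> int \<Rightarrow> 'a" where
  "mon q t a b = q powi a * t powi b"

definition brk :: "'a::field \<Rightarrow> 'a \<Rightarrow> int \<Rightarrow> int \<Rightarrow> 'a" where
  "brk q t i j = 1 - mon q t i j"

definition alpha :: "'a::field \<Rightarrow> 'a \<Rightarrow> nat list \<Rightarrow> nat list \<Rightarrow> 'a" where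
  "alpha q t rho kappa =
     (\<Prod>c\<in>Rset rho kappa.
        brk q t (int (arm kappa c)) (int (leg kappa c) + 1) / brk q t (int (arm rho c)) (int (leg rho c) + 1)) *
     (\<Prod>c\<in>Cset rho kappa.
        brk q t (int (arm kappa c) + 1) (int (leg kappa c)) / brk q t (int (arm rho c) + 1) (int (leg rho c)))"

definition alphabar :: "'a::field \<Rightarrow> 'a \<Rightarrow> nat list \<Rightarrow> nat list \<Rightarrow> 'a" where
  "alphabar q t rho kappa =
     (\<Prod>c\<in>Rset rho kappa.
        brk q t (int (arm kappa c) + 1) (int (leg kappa c)) / brk q t (int (arm rho c) + 1) (int (leg rho c))) *
     (\<Prod>c\<in>Cset rho kappa.
        brk q t (int (arm kappa c)) (int (leg kappa c) + 1) / brk q t (int (arm rho c)) (int (leg rho c) + 1))"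

definition beta :: "'a::field \<Rightarrow> 'a \<Rightarrow> nat list \<Rightarrow> nat list \<Rightarrow> 'a" where
  "beta q t rho kappa = 1 / alpha q t rho kappa"

definition betabar :: "'a::field \<Rightarrow> 'a \<Rightarrow> nat list \<Rightarrow> nat list \<Rightarrow> 'a" where
  "betabar q t rho kappa = 1 / alphabar q t rho kappa"

definition Aexp :: "nat list \<Rightarrow> nat list \<Rightarrow> nat list \<Rightarrow> int" where
  "Aexp nu lam mu = nn'_skew lam mu - nn'_skew nu lam"

definition Bexp :: "nat list \<Rightarrow> nat list \<Rightarrow> nat list \<Rightarrow> int" where
  "Bexp nu lam mu = nn_skew nu lam - nn_skew lam mu"

definition gamma :: "'a::field \<Rightarrow> 'a \<Rightarrow> nat list \<Rightarrow> nat list \<Rightarrow> nat list \<Rightarrow> 'a" where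
  "gamma q t nu lam mu =
     (1 - mon q t (Aexp nu lam mu) (Bexp nu lam mu)) *
     (1 - mon q t (Aexp nu lam mu + 1) (Bexp nu lam mu - 1)) / ((1 - q) * (1 - t))"

definition P1 :: "'a::field \<Rightarrow> 'a \<Rightarrow> nat list \<Rightarrow> nat list \<Rightarrow> 'a" where
  "P1 q t lam nu = t powi (nn_skew nu lam) * alpha q t nu lam"

definition P1bar :: "'a::field \<Rightarrow> 'a \<Rightarrow> nat list \<Rightarrow> nat list \<Rightarrow> 'a" where
  "P1bar q t lam nu = t powi (nn_skew nu lam) * alphabar q t nu lam"

definition P2 :: "'a::field \<Rightarrow> 'a \<Rightarrow> nat list \<Rightarrow> nat list \<Rightarrow> nat list \<Rightarrow> 'a" where
  "P2 q t lam mu nu = t powi (Bexp nu lam mu - 1) * alpha q t nu lam * beta q t lam mu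
                        / gamma q t nu lam mu"

definition P2bar :: "'a::field \<Rightarrow> 'a \<Rightarrow> nat list \<Rightarrow> nat list \<Rightarrow> nat list \<Rightarrow> 'a" where
  "P2bar q t lam mu nu = t powi (Bexp nu lam mu - 1) * alphabar q t nu lam * betabar q t lam mu
                        / gamma q t nu lam mu"

definition dps :: "nat list \<Rightarrow> nat list" where
  "dps lam = rev (sorted_list_of_set (set lam))"

definition ndist :: "nat list \<Rightarrow> nat" where
  "ndist lam = length (dps lam)"

text \<open>u_i for 1 <= i <= d, and u_{d+1} = 0\<close>
definition u :: "nat list \<Rightarrow> nat \<Rightarrow> nat" where
  "u lam i = (if 1 \<le> i \<and> i \<le> ndist lam then dps lam ! (i - 1) else 0)"

definition v :: "nat list \<Rightarrow> nat \<Rightarrow> nat" where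
  "v lam i = length (filter (\<lambda>p. p = u lam i) lam)"

definition h :: "nat list \<Rightarrow> nat \<Rightarrow> int" where
  "h lam i = int (u lam i) - int (u lam (i + 1))"

definition xs :: "nat list \<Rightarrow> nat \<Rightarrow> int" where
  "xs lam i = (\<Sum>j\<in>{1..i}. h lam j)"

definition ys :: "nat list \<Rightarrow> nat \<Rightarrow> int" where
  "ys lam i = (\<Sum>j\<in>{1..i}. int (v lam j))"

text \<open>add a cell in row k (1-based), remove a cell from row k\<close>
definition add_cell :: "nat list \<Rightarrow> nat \<Rightarrow> nat list" where
  "add_cell lam k = (if k \<le> length lam then lam[k - 1 := lam ! (k - 1) + 1] else lam @ [1])"

definition remove_cell :: "nat list \<Rightarrow> nat \<Rightarrow> nat list" where
  "remove_cell lam k = filter (\<lambda>p. 0 < p) (lam[k - 1 := lam ! (k - 1) - 1])"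

definition lam_plus :: "nat list \<Rightarrow> nat \<Rightarrow> nat list" where
  "lam_plus lam s = add_cell lam (nat (ys lam s) + 1)"

definition lam_minus :: "nat list \<Rightarrow> nat \<Rightarrow> nat list" where
  "lam_minus lam r = (if r = 0 then lam else remove_cell lam (nat (ys lam r)))"

definition pp :: "'a::field \<Rightarrow> 'a \<Rightarrow> nat list \<Rightarrow> nat \<Rightarrow> nat \<Rightarrow> 'a" where
  "pp q t lam r s = (if r = 0 then P1 q t lam (lam_plus lam s)
                     else P2 q t lam (lam_minus lam r) (lam_plus lam s))"

definition ppbar :: "'a::field \<Rightarrow> 'a \<Rightarrow> nat list \<Rightarrow> nat \<Rightarrow> nat \<Rightarrow> 'a" where
  "ppbar q t lam r s = (if r = 0 then P1bar q t lam (lam_plus lam s)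
                       else P2bar q t lam (lam_minus lam r) (lam_plus lam s))"

end

theory Submission
  imports Defs
begin

definition VV :: "nat list \<Rightarrow> nat \<Rightarrow> nat" where
  "VV lam j = (\<Sum>i\<in>{1..j}. v lam i)"

lemma ys_VV: "ys lam j = int (VV lam j)"
  unfolding ys_def VV_def by simp

lemma xs_u: "xs lam j = int (u lam 1) - int (u lam (Suc j))"
  by (induction j) (simp_all add: xs_def h_def)

lemma prt_beyond: "length l < y \<Longrightarrow> prt l y = 0"
  unfolding prt_def by simp

lemma prt_0[simp]: "prt l 0 = 0" unfolding prt_def by simp

lemma prt_in: "0 < y \<Longrightarrow> y \<le> length l \<Longrightarrow> prt l y \<in> set l"
  unfolding prt_def by simp

lemma filter_or_length:
  "(\<And>p. p \<in> set l \<Longrightarrow> \<not> (P p \<and> Q p)) \<Longrightarrow>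
   length (filter (\<lambda>p. P p \<or> Q p) l) = length (filter P l) + length (filter Q l)"
  by (induction l) auto

lemma sorted_thresh:
  assumes "sorted_wrt (\<ge>) (l::nat list)" "i < length l"
  shows "c \<le> l ! i \<longleftrightarrow> i < length (filter (\<lambda>p. c \<le> p) l)"
  using assms
proof (induction l arbitrary: i)
  case Nil then show ?case by simp
next
  case (Cons a l)
  show ?case
  proof (cases "c \<le> a")
    case True
    then show ?thesis using Cons by (cases i) auto
  next
    case False
    have "\<forall>p\<in>set l. \<not> c \<le> p" using False Cons.prems(1) by fastforce
    then have "filter (\<lambda>p. c \<le> p) (a # l) = []" using False by (simp add: filter_empty_conv)
    moreover have "\<not> c \<le> (a # l) ! i"
    proof (cases i)
      case 0 then show ?thesis using False by simp
    next
      case (Suc k)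
      then have "l ! k \<in> set l" using Cons.prems(2) by simp
      then have "l ! k \<le> a" using Cons.prems(1) by simp
      then show ?thesis using False Suc by simp
    qed
    ultimately show ?thesis by simp
  qed
qed

lemma conjp_filter:
  assumes "0 < x"
  shows "conjp l x = length (filter (\<lambda>p. x \<le> p) l)"
proof -
  have "{y. 0 < y \<and> x \<le> prt l y} = Suc ` {i. i < length l \<and> x \<le> l ! i}"
  proof (rule set_eqI, rule iffI)
    fix y assume "y \<in> {y. 0 < y \<and> x \<le> prt l y}"
    then have y: "0 < y" "x \<le> prt l y" by auto
    then have "y \<le> length l" using assms prt_beyond[of l y] by (cases "length l < y") auto
    then show "y \<in> Suc ` {i. i < length l \<and> x \<le> l ! i}"
      using y by (auto simp: prt_def image_iff intro!: exI[of _ "y - 1"])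
  next
    fix y assume "y \<in> Suc ` {i. i < length l \<and> x \<le> l ! i}"
    then show "y \<in> {y. 0 < y \<and> x \<le> prt l y}" by (auto simp: prt_def)
  qed
  then show ?thesis unfolding conjp_def length_filter_conv_card
    by (simp add: card_image)
qed

locale part =
  fixes lam :: "nat list"
  assumes ispart: "is_partition lam"
begin

abbreviation d where "d \<equiv> ndist lam"
abbreviation L where "L \<equiv> length lam"
abbreviation U where "U \<equiv> u lam"
abbreviation V where "V \<equiv> VV lam"

lemma sorted_lam: "sorted_wrt (\<ge>) lam" using ispart unfolding is_partition_def by simp
lemma pos_lam: "p \<in> set lam \<Longrightarrow> 0 < p" using ispart unfolding is_partition_def by simp

lemma dps_sorted: "sorted_wrt (>) (dps lam)"
  unfolding dps_def sorted_wrt_rev using strict_sorted_list_of_set[of "set lam"] by simp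

lemma dps_set: "set (dps lam) = set lam"
  unfolding dps_def by simp

lemma U_dec: "1 \<le> i \<Longrightarrow> i < j \<Longrightarrow> j \<le> d \<Longrightarrow> U j < U i"
  using sorted_wrt_nth_less[OF dps_sorted, of "i - 1" "j - 1"]
  unfolding u_def ndist_def by simp

lemma U_mem: "1 \<le> i \<Longrightarrow> i \<le> d \<Longrightarrow> U i \<in> set lam"
proof -
  assume a: "1 \<le> i" "i \<le> d"
  then have "i - 1 < length (dps lam)" unfolding ndist_def by simp
  then have "dps lam ! (i - 1) \<in> set lam" using dps_set nth_mem by blast
  then show ?thesis unfolding u_def using a by simp
qed

lemma U_pos: "1 \<le> i \<Longrightarrow> i \<le> d \<Longrightarrow> 0 < U i"
  using U_mem pos_lam by blast

lemma U_zero: "i = 0 \<or> d < i \<Longrightarrow> U i = 0"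
  unfolding u_def by auto

lemma mem_U: "p \<in> set lam \<Longrightarrow> \<exists>i. 1 \<le> i \<and> i \<le> d \<and> p = U i"
proof -
  assume "p \<in> set lam"
  then have "p \<in> set (dps lam)" using dps_set by simp
  then obtain k where k: "k < length (dps lam)" "p = dps lam ! k" by (metis in_set_conv_nth)
  then show ?thesis unfolding u_def ndist_def by (intro exI[of _ "Suc k"]) simp
qed

lemma U_le_iff: "1 \<le> i \<Longrightarrow> i \<le> d \<Longrightarrow> 1 \<le> j \<Longrightarrow> j \<le> d \<Longrightarrow> U j \<le> U i \<longleftrightarrow> i \<le> j"
proof -
  assume a: "1 \<le> i" "i \<le> d" "1 \<le> j" "j \<le> d"
  show ?thesis
  proof
    assume "U j \<le> U i"
    then show "i \<le> j" using U_dec[of j i] a by (meson not_le)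
  next
    assume "i \<le> j"
    then show "U j \<le> U i" using U_dec[of i j] a by (cases "i = j") auto
  qed
qed

lemma U_Suc_lt_iff: "1 \<le> i \<Longrightarrow> i \<le> d \<Longrightarrow> j \<le> d \<Longrightarrow> U (Suc j) < U i \<longleftrightarrow> i \<le> j"
proof -
  assume a: "1 \<le> i" "i \<le> d" "j \<le> d"
  show ?thesis
  proof (cases "Suc j \<le> d")
    case True
    have "U i \<le> U (Suc j) \<longleftrightarrow> Suc j \<le> i" by (rule U_le_iff) (use a True in auto)
    then show ?thesis by auto
  next
    case False
    then have "j = d" using a by simp
    then show ?thesis using a U_zero[of "Suc j"] U_pos[of i] by simp
  qed
qed

lemma U_Suc_lt: "1 \<le> j \<Longrightarrow> j \<le> d \<Longrightarrow> U (Suc j) < U j"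
  using U_Suc_lt_iff[of j j] by simp

lemma U_mono: "1 \<le> i \<Longrightarrow> i \<le> j \<Longrightarrow> U j \<le> U i"
proof -
  assume ij: "1 \<le> i" "i \<le> j"
  show ?thesis
  proof (cases "d < j")
    case True
    then show ?thesis using U_zero[of j] by simp
  next
    case False
    then show ?thesis using U_le_iff[of i j] ij by simp
  qed
qed

lemma v_pos: "1 \<le> j \<Longrightarrow> j \<le> d \<Longrightarrow> 0 < v lam j"
  unfolding v_def using U_mem[of j] by (simp add: filter_empty_conv length_greater_0_conv)

lemma cnt: "1 \<le> j \<Longrightarrow> j \<le> d \<Longrightarrow> length (filter (\<lambda>p. U j \<le> p) lam) = V j"
proof (induction j rule: nat_induct_at_least)
  case base
  have "filter (\<lambda>p. U 1 \<le> p) lam = filter (\<lambda>p. p = U 1) lam"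
  proof (rule filter_cong)
    fix p assume "p \<in> set lam"
    then obtain i where i: "1 \<le> i" "i \<le> d" "p = U i" using mem_U by blast
    show "(U 1 \<le> p) = (p = U 1)" using U_le_iff[of i 1] i base by (auto simp: le_antisym)
  qed simp
  then show ?case unfolding VV_def v_def by simp
next
  case (Suc j)
  have "filter (\<lambda>p. U (Suc j) \<le> p) lam = filter (\<lambda>p. U j \<le> p \<or> p = U (Suc j)) lam"
  proof (rule filter_cong)
    fix p assume "p \<in> set lam"
    then obtain i where i: "1 \<le> i" "i \<le> d" "p = U i" using mem_U by blast
    show "(U (Suc j) \<le> p) = (U j \<le> p \<or> p = U (Suc j))"
      using U_le_iff[of i "Suc j"] U_le_iff[of i j] i Suc by (auto simp: le_Suc_eq)
  qed simp
  also have "length \<dots> = length (filter (\<lambda>p. U j \<le> p) lam) + length (filter (\<lambda>p. p = U (Suc j)) lam)"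
    by (rule filter_or_length) (use U_Suc_lt[of j] Suc in auto)
  finally show ?case using Suc unfolding VV_def v_def by simp
qed

lemma V_0[simp]: "V 0 = 0" unfolding VV_def by simp

lemma V_Suc: "V (Suc j) = V j + v lam (Suc j)" unfolding VV_def by simp

lemma V_mono: "i \<le> j \<Longrightarrow> V i \<le> V j"
  unfolding VV_def by (rule sum_mono2) auto

lemma V_strict: "1 \<le> j \<Longrightarrow> j \<le> d \<Longrightarrow> V (j - 1) < V j"
  using V_Suc[of "j - 1"] v_pos[of j] by simp

lemma V_le_L: assumes "j \<le> d" shows "V j \<le> L"
proof (cases "j = 0")
  case False
  then have "length (filter (\<lambda>p. U j \<le> p) lam) = V j" using cnt[of j] assms by simp
  then show ?thesis by (metis length_filter_le)
qed simp

lemma V_d: "V d = L"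
proof (cases "d = 0")
  case True
  then have "lam = []" using dps_set unfolding ndist_def by simp
  then show ?thesis using True by (simp add: VV_def)
next
  case False
  have "\<forall>p\<in>set lam. U d \<le> p"
  proof
    fix p assume "p \<in> set lam"
    then obtain i where i: "1 \<le> i" "i \<le> d" "p = U i" using mem_U by blast
    then show "U d \<le> p" using U_mono[of i d] by simp
  qed
  then have "filter (\<lambda>p. U d \<le> p) lam = lam" by (rule filter_True)
  then show ?thesis using cnt[of d] False by simp
qed

lemma prt_ge: "1 \<le> j \<Longrightarrow> j \<le> d \<Longrightarrow> 0 < y \<Longrightarrow> U j \<le> prt lam y \<longleftrightarrow> y \<le> V j"
proof -
  assume a: "1 \<le> j" "j \<le> d" "0 < y"
  show ?thesis
  proof (cases "y \<le> L")
    case True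
    then have "prt lam y = lam ! (y - 1)" unfolding prt_def using a by simp
    have e: "y - 1 < V j \<longleftrightarrow> y \<le> V j" using a(3) by arith
    show ?thesis using sorted_thresh[OF sorted_lam, of "y - 1" "U j"] cnt[OF a(1,2)] True a(3) e
      \<open>prt lam y = lam ! (y - 1)\<close> by simp
  next
    case False
    then show ?thesis using prt_beyond[of lam y] U_pos[OF a(1,2)] V_le_L[OF a(2)] by simp
  qed
qed

lemma prt_cases: "prt lam y = 0 \<or> (\<exists>i. 1 \<le> i \<and> i \<le> d \<and> prt lam y = U i)"
proof (cases "0 < y \<and> y \<le> L")
  case True then show ?thesis using prt_in[of y lam] mem_U by blast
next
  case False then show ?thesis unfolding prt_def by auto
qed

lemma prt_gt: "j \<le> d \<Longrightarrow> 0 < y \<Longrightarrow> U (Suc j) < prt lam y \<longleftrightarrow> y \<le> V j"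
proof -
  assume a: "j \<le> d" "0 < y"
  show ?thesis
  proof (cases "j = 0")
    case True
    have "\<not> U 1 < prt lam y"
      using prt_cases[of y]
    proof
      assume "\<exists>i. 1 \<le> i \<and> i \<le> d \<and> prt lam y = U i"
      then obtain i where "1 \<le> i" "i \<le> d" "prt lam y = U i" by blast
      then show ?thesis using U_mono[of 1 i] by simp
    qed simp
    then show ?thesis using True a by simp
  next
    case False
    have "U (Suc j) < prt lam y \<longleftrightarrow> U j \<le> prt lam y"
      using prt_cases[of y]
    proof
      assume "prt lam y = 0"
      then show ?thesis using U_pos[of j] False a by simp
    next
      assume "\<exists>i. 1 \<le> i \<and> i \<le> d \<and> prt lam y = U i"
      then obtain i where i: "1 \<le> i" "i \<le> d" "prt lam y = U i" by blast
      then show ?thesis using U_Suc_lt_iff[of i j] U_le_iff[of i j] a False by simp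
    qed
    then show ?thesis using prt_ge[of j y] a False by simp
  qed
qed

lemma prt_block: "1 \<le> j \<Longrightarrow> j \<le> d \<Longrightarrow> V (j - 1) < y \<Longrightarrow> y \<le> V j \<Longrightarrow> prt lam y = U j"
proof -
  assume a: "1 \<le> j" "j \<le> d" "V (j - 1) < y" "y \<le> V j"
  have y0: "0 < y" using a by simp
  have ge: "U j \<le> prt lam y" using prt_ge[OF a(1,2) y0] a by simp
  have lt: "\<not> U (Suc (j - 1)) < prt lam y" using prt_gt[of "j - 1" y] a by simp
  show ?thesis using ge lt a by simp
qed

lemma conjp_block:
  assumes "0 < x" "j \<le> d" "U (Suc j) < x" "1 \<le> j \<Longrightarrow> x \<le> U j"
  shows "conjp lam x = V j"
proof -
  have "{y. 0 < y \<and> x \<le> prt lam y} = {y. 0 < y \<and> U (Suc j) < prt lam y}"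
  proof -
    have "x \<le> prt lam y \<longleftrightarrow> U (Suc j) < prt lam y" for y
      using prt_cases[of y]
    proof
      assume "prt lam y = 0" then show ?thesis using assms by simp
    next
      assume "\<exists>i. 1 \<le> i \<and> i \<le> d \<and> prt lam y = U i"
      then obtain i where i: "1 \<le> i" "i \<le> d" "prt lam y = U i" by blast
      show ?thesis
      proof (cases "i \<le> j")
        case True
        then show ?thesis using U_Suc_lt_iff[of i j] i assms U_mono[of i j] by auto
      next
        case False
        then have "U i \<le> U (Suc j)" using U_mono[of "Suc j" i] by simp
        then show ?thesis using U_Suc_lt_iff[of i j] i assms False by simp
      qed
    qed
    then show ?thesis by auto
  qed
  also have "\<dots> = {1..V j}" using prt_gt[OF assms(2)] by auto
  finally show ?thesis unfolding conjp_def by simp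
qed

end

lemma prt_update: "k < length l \<Longrightarrow> prt (l[k := a]) y = (if y = Suc k then a else prt l y)"
  unfolding prt_def by (auto simp: nth_list_update)

lemma prt_append1: "prt (l @ [a]) y = (if y = Suc (length l) then a else prt l y)"
  unfolding prt_def by (auto simp: nth_append)

lemma prt_take: "prt (take k l) y = (if y \<le> k then prt l y else 0)"
  unfolding prt_def by auto

lemma (in part) prt_plus:
  assumes "s \<le> d"
  shows "prt (lam_plus lam s) y = (if y = Suc (V s) then Suc (U (Suc s)) else prt lam y)"
proof -
  have lp: "lam_plus lam s = add_cell lam (Suc (V s))"
    unfolding lam_plus_def ys_VV by simp
  show ?thesis
  proof (cases "s < d")
    case True
    have "V s < V (Suc s)" using V_strict[of "Suc s"] True by simp
    moreover have "V (Suc s) \<le> L" using V_le_L[of "Suc s"] True by simp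
    ultimately have k: "V s < L" by simp
    have "prt lam (Suc (V s)) = U (Suc s)"
      using prt_block[of "Suc s" "Suc (V s)"] True \<open>V s < V (Suc s)\<close> by simp
    then have "lam ! V s = U (Suc s)" unfolding prt_def using k by simp
    then have "lam_plus lam s = lam[V s := Suc (U (Suc s))]"
      unfolding lp add_cell_def using k by simp
    then show ?thesis using prt_update[OF k] by simp
  next
    case False
    then have sd: "s = d" using assms by simp
    then have "lam_plus lam s = lam @ [1]" unfolding lp add_cell_def using V_d by simp
    then show ?thesis using prt_append1[of lam 1 y] sd V_d U_zero[of "Suc d"] by simp
  qed
qed

lemma (in part) prt_minus:
  assumes "1 \<le> r" "r \<le> d"
  shows "prt (lam_minus lam r) y = (if y = V r then U r - 1 else prt lam y)"
proof -
  have lm: "lam_minus lam r = remove_cell lam (V r)"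
    unfolding lam_minus_def ys_VV using assms by simp
  have vr: "0 < V r" "V r \<le> L" using V_strict[of r] V_le_L[of r] assms by auto
  have k: "V r - 1 < L" using vr by simp
  have "prt lam (V r) = U r" using prt_block[of r "V r"] assms V_strict[of r] by simp
  then have nth: "lam ! (V r - 1) = U r" unfolding prt_def using vr by simp
  show ?thesis
  proof (cases "1 < U r")
    case True
    have "\<forall>p\<in>set (lam[V r - 1 := U r - 1]). 0 < p"
      using True pos_lam by (auto dest: set_update_subset_insert[THEN subsetD])
    then have "lam_minus lam r = lam[V r - 1 := U r - 1]"
      unfolding lm remove_cell_def nth by simp
    then show ?thesis using prt_update[OF k] vr by auto
  next
    case False
    then have ur: "U r = 1" using U_pos[of r] assms by simp
    have "r = d"
    proof (rule ccontr)
      assume "r \<noteq> d"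
      then have "U (Suc r) < U r" "0 < U (Suc r)" using U_Suc_lt[of r] U_pos[of "Suc r"] assms by auto
      then show False using ur by simp
    qed
    then have vl: "V r = L" using V_d by simp
    have "lam = take (L - 1) lam @ [lam ! (L - 1)]"
      using vr vl by (metis Suc_diff_1 take_Suc_conv_app_nth append_take_drop_id take_all le_refl diff_less zero_less_one)
    have upd: "lam[V r - 1 := U r - 1] = take (L - 1) lam @ [0]"
      using vr vl ur by (metis Suc_diff_1 diff_self_eq_0 list_update_length length_take min_absorb2 diff_le_self
          \<open>lam = take (L - 1) lam @ [lam ! (L - 1)]\<close> list_update_append1 append_eq_conv_conj)
    have "\<forall>p\<in>set (take (L - 1) lam). 0 < p" using pos_lam by (meson in_set_takeD)
    then have "lam_minus lam r = take (L - 1) lam"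
      unfolding lm remove_cell_def nth upd by simp
    then show ?thesis using prt_take[of "L - 1" lam y] vl ur prt_beyond[of lam y] vr
      by (auto simp: prt_def)
  qed
qed

lemma prt_le_sum: "prt l y \<le> sum_list l"
  unfolding prt_def by (auto intro: member_le_sum_list)

lemma finite_cells: "finite (cells l)"
proof -
  have "cells l \<subseteq> {0..sum_list l} \<times> {0..length l}"
  proof
    fix c assume "c \<in> cells l"
    then obtain x y where c: "c = (x, y)" "0 < x" "0 < y" "x \<le> prt l y" unfolding cells_def by auto
    then have "y \<le> length l" using prt_beyond[of l y] by (cases "length l < y") auto
    then show "c \<in> {0..sum_list l} \<times> {0..length l}" using c prt_le_sum[of l y] by auto
  qed
  then show ?thesis by (rule finite_subset) simp
qed

lemma finite_col: "0 < x \<Longrightarrow> finite {y. 0 < y \<and> x \<le> prt l y}"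
proof -
  assume x: "0 < x"
  have "{y. 0 < y \<and> x \<le> prt l y} \<subseteq> {0..length l}"
  proof
    fix y assume "y \<in> {y. 0 < y \<and> x \<le> prt l y}"
    then show "y \<in> {0..length l}" using x prt_beyond[of l y] by (cases "length l < y") auto
  qed
  then show ?thesis by (rule finite_subset) simp
qed

locale addcell =
  fixes ka rh :: "nat list" and x0 y0 :: nat
  assumes x0: "0 < x0" and y0: "0 < y0"
    and hrh: "\<And>y. prt rh y = (if y = y0 then x0 else prt ka y)"
    and hrow: "prt ka y0 = x0 - 1"
    and hcol: "\<And>y. 0 < y \<Longrightarrow> (x0 \<le> prt ka y \<longleftrightarrow> y < y0)"
begin

lemma conj_ka_x0: "conjp ka x0 = y0 - 1"
proof -
  have "{y. 0 < y \<and> x0 \<le> prt ka y} = {0<..<y0}" using hcol by auto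
  then show ?thesis unfolding conjp_def by simp
qed

lemma conj_rh: "conjp rh x = (if x = x0 then y0 else conjp ka x)"
proof (cases "x = x0")
  case True
  have "{y. 0 < y \<and> x0 \<le> prt rh y} = {0<..y0}" using hcol hrh y0 by auto
  then show ?thesis using True unfolding conjp_def by simp
next
  case False
  have "{y. 0 < y \<and> x \<le> prt rh y} = {y. 0 < y \<and> x \<le> prt ka y}"
    using hrh hrow False x0 by auto
  then show ?thesis using False unfolding conjp_def by simp
qed

lemma conj_ka_ge: "0 < x \<Longrightarrow> x < x0 \<Longrightarrow> y0 \<le> conjp ka x"
proof -
  assume x: "0 < x" "x < x0"
  have "{0<..y0} \<subseteq> {y. 0 < y \<and> x \<le> prt ka y}"
  proof
    fix y assume y: "y \<in> {0<..y0}"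
    show "y \<in> {y. 0 < y \<and> x \<le> prt ka y}"
    proof (cases "y = y0")
      case True then show ?thesis using hrow x y by auto
    next
      case False then show ?thesis using hcol[of y] x y by auto
    qed
  qed
  from card_mono[OF finite_col[OF x(1)] this] show ?thesis unfolding conjp_def by simp
qed

lemma cells_rh: "cells rh = insert (x0, y0) (cells ka)"
  unfolding cells_def using hrh hrow x0 y0 by auto

lemma notin: "(x0, y0) \<notin> cells ka"
  unfolding cells_def using hrow x0 by auto

lemma diff_cells: "cells rh - cells ka = {(x0, y0)}"
  using cells_rh notin by auto

lemma Rset_eq: "Rset rh ka = (\<lambda>x. (x, y0)) ` {0<..<x0}"
proof -
  have "Rset rh ka = {c \<in> cells ka. snd c = y0}" unfolding Rset_def diff_cells by auto
  also have "\<dots> = (\<lambda>x. (x, y0)) ` {0<..<x0}" unfolding cells_def using hrow y0 x0 by auto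
  finally show ?thesis .
qed

lemma Cset_eq: "Cset rh ka = (\<lambda>y. (x0, y)) ` {0<..<y0}"
proof -
  have "Cset rh ka = {c \<in> cells ka. fst c = x0}" unfolding Cset_def diff_cells by auto
  also have "\<dots> = (\<lambda>y. (x0, y)) ` {0<..<y0}" unfolding cells_def using hcol x0 by auto
  finally show ?thesis .
qed

lemma R_vals:
  assumes "0 < x" "x < x0"
  shows "int (arm ka (x, y0)) = int x0 - 1 - int x"
    and "int (arm rh (x, y0)) = int x0 - int x"
    and "int (leg ka (x, y0)) = int (conjp ka x) - int y0"
    and "int (leg rh (x, y0)) = int (conjp ka x) - int y0"
  using assms conj_ka_ge[OF assms] hrow hrh conj_rh[of x]
  unfolding arm_def leg_def by auto

lemma C_vals:
  assumes "0 < y" "y < y0"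
  shows "int (arm ka (x0, y)) = int (prt ka y) - int x0"
    and "int (arm rh (x0, y)) = int (prt ka y) - int x0"
    and "int (leg ka (x0, y)) = int y0 - 1 - int y"
    and "int (leg rh (x0, y)) = int y0 - int y"
  using assms hcol[of y] hrh[of y] conj_rh[of x0] conj_ka_x0
  unfolding arm_def leg_def by auto

lemma alpha_eq:
  "alpha q t rh ka =
    (\<Prod>x\<in>{0<..<x0}. brk q t (int x0 - 1 - int x) (int (conjp ka x) - int y0 + 1) /
                     brk q t (int x0 - int x) (int (conjp ka x) - int y0 + 1)) *
    (\<Prod>y\<in>{0<..<y0}. brk q t (int (prt ka y) - int x0 + 1) (int y0 - 1 - int y) /
                     brk q t (int (prt ka y) - int x0 + 1) (int y0 - int y))"
  unfolding alpha_def Rset_eq Cset_eq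
  apply (simp add: prod.reindex inj_on_def)
  apply (intro arg_cong2[where f="(*)"] prod.cong refl)
   apply (auto simp: R_vals C_vals)
  done

lemma alphabar_eq:
  "alphabar q t rh ka =
    (\<Prod>x\<in>{0<..<x0}. brk q t (int x0 - int x) (int (conjp ka x) - int y0) /
                     brk q t (int x0 - int x + 1) (int (conjp ka x) - int y0)) *
    (\<Prod>y\<in>{0<..<y0}. brk q t (int (prt ka y) - int x0) (int y0 - int y) /
                     brk q t (int (prt ka y) - int x0) (int y0 - int y + 1))"
  unfolding alphabar_def Rset_eq Cset_eq
  apply (simp add: prod.reindex inj_on_def)
  apply (intro arg_cong2[where f="(*)"] prod.cong refl)
   apply (auto simp: R_vals C_vals)
  done

lemma nn_skew_eq: "nn_skew rh ka = int y0 - 1"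
proof -
  have leg0: "leg rh (x0, y0) = 0" unfolding leg_def using conj_rh by simp
  have legc: "int (leg rh c) = int (leg ka c) + (if fst c = x0 then 1 else 0)" if "c \<in> cells ka" for c
  proof -
    obtain x y where c0: "c = (x, y)" by (cases c)
    have c: "c = (x, y)" "0 < x" "0 < y" "x \<le> prt ka y" using that c0 unfolding cells_def by auto
    show ?thesis
    proof (cases "x = x0")
      case True
      then have "y < y0" using hcol[of y] c by simp
      then show ?thesis using c True conj_rh[of x0] conj_ka_x0 unfolding leg_def by auto
    next
      case False
      then show ?thesis using c conj_rh[of x] unfolding leg_def by auto
    qed
  qed
  have "int (nn rh) = (\<Sum>c\<in>cells ka. int (leg rh c))"
    unfolding nn_def cells_rh using notin finite_cells[of ka] leg0 by simp
  also have "\<dots> = (\<Sum>c\<in>cells ka. int (leg ka c)) + (\<Sum>c\<in>cells ka. (if fst c = x0 then 1 else 0))"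
    using legc by (simp add: sum.distrib cong: sum.cong)
  also have "(\<Sum>c\<in>cells ka. (if fst c = x0 then 1 else 0)) = int (card {c \<in> cells ka. fst c = x0})"
    using finite_cells[of ka] by (simp add: sum.If_cases Int_def conj_commute)
  also have "{c \<in> cells ka. fst c = x0} = (\<lambda>y. (x0, y)) ` {0<..<y0}"
    unfolding cells_def using hcol x0 by auto
  also have "card \<dots> = y0 - 1" by (simp add: card_image inj_on_def)
  finally show ?thesis unfolding nn_skew_def nn_def using y0 by simp
qed

lemma nn'_skew_eq: "nn'_skew rh ka = int x0 - 1"
proof -
  have arm0: "arm rh (x0, y0) = 0" unfolding arm_def using hrh by simp
  have armc: "int (arm rh c) = int (arm ka c) + (if snd c = y0 then 1 else 0)" if "c \<in> cells ka" for c
  proof -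
    obtain x y where c0: "c = (x, y)" by (cases c)
    have c: "c = (x, y)" "0 < x" "0 < y" "x \<le> prt ka y" using that c0 unfolding cells_def by auto
    show ?thesis
    proof (cases "y = y0")
      case True
      then show ?thesis using c hrh[of y] hrow unfolding arm_def by auto
    next
      case False
      then show ?thesis using c hrh[of y] unfolding arm_def by auto
    qed
  qed
  have "int (nn' rh) = (\<Sum>c\<in>cells ka. int (arm rh c))"
    unfolding nn'_def cells_rh using notin finite_cells[of ka] arm0 by simp
  also have "\<dots> = (\<Sum>c\<in>cells ka. int (arm ka c)) + (\<Sum>c\<in>cells ka. (if snd c = y0 then 1 else 0))"
    using armc by (simp add: sum.distrib cong: sum.cong)
  also have "(\<Sum>c\<in>cells ka. (if snd c = y0 then 1 else 0)) = int (card {c \<in> cells ka. snd c = y0})"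
    using finite_cells[of ka] by (simp add: sum.If_cases Int_def conj_commute)
  also have "{c \<in> cells ka. snd c = y0} = (\<lambda>x. (x, y0)) ` {0<..<x0}"
    unfolding cells_def using hrow x0 y0 by auto
  also have "card \<dots> = x0 - 1" by (simp add: card_image inj_on_def)
  finally show ?thesis unfolding nn'_skew_def nn'_def using x0 by simp
qed

end

lemma tele:
  fixes H :: "nat \<Rightarrow> 'a::field"
  assumes "a \<le> b" "\<forall>x\<in>{a..b}. H x \<noteq> 0"
  shows "(\<Prod>x\<in>{a<..b}. H x / H (x - 1)) = H b / H a"
  using assms
proof (induction b)
  case 0 then show ?case by simp
next
  case (Suc b)
  show ?case
  proof (cases "a = Suc b")
    case True then show ?thesis using Suc.prems by simp
  next
    case False
    then have ab: "a \<le> b" using Suc.prems by simp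
    have "{a<..Suc b} = insert (Suc b) {a<..b}" using ab by auto
    then have "(\<Prod>x\<in>{a<..Suc b}. H x / H (x - 1)) = H (Suc b) / H b * (H b / H a)"
      using Suc.IH[OF ab] Suc.prems by simp
    also have "\<dots> = H (Suc b) / H a" using Suc.prems ab by simp
    finally show ?thesis .
  qed
qed

lemma blocks_inc:
  fixes f :: "nat \<Rightarrow> 'a::comm_monoid_mult"
  assumes "a \<le> b" "\<forall>j\<in>{a..<b}. B j \<le> B (Suc j)"
  shows "(\<Prod>x\<in>{B a<..B b}. f x) = (\<Prod>j\<in>{a<..b}. \<Prod>x\<in>{B (j - 1)<..B j}. f x)"
  using assms
proof (induction b)
  case 0 then show ?case by simp
next
  case (Suc b)
  show ?case
  proof (cases "a = Suc b")
    case True then show ?thesis by simp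
  next
    case False
    then have ab: "a \<le> b" using Suc.prems by simp
    have mono: "B a \<le> B b"
      using ab Suc.prems(2) by (induction b rule: dec_induct) (auto intro: order_trans)
    have st: "B b \<le> B (Suc b)" using Suc.prems(2) ab by simp
    have s1: "{B a<..B (Suc b)} = {B b<..B (Suc b)} \<union> {B a<..B b}" using mono st by auto
    have s2: "{a<..Suc b} = insert (Suc b) {a<..b}" using ab by auto
    have "(\<Prod>x\<in>{B a<..B (Suc b)}. f x) = (\<Prod>x\<in>{B b<..B (Suc b)}. f x) * (\<Prod>x\<in>{B a<..B b}. f x)"
      unfolding s1 by (rule prod.union_disjoint) auto
    then show ?thesis using Suc.IH[OF ab] Suc.prems unfolding s2 by simp
  qed
qed

lemma blocks_dec:
  fixes f :: "nat \<Rightarrow> 'a::comm_monoid_mult"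
  assumes "a \<le> b" "\<forall>j\<in>{a..<b}. U (Suc j) \<le> U j"
  shows "(\<Prod>x\<in>{U b<..U a}. f x) = (\<Prod>j\<in>{a<..b}. \<Prod>x\<in>{U j<..U (j - 1)}. f x)"
  using assms
proof (induction b)
  case 0 then show ?case by simp
next
  case (Suc b)
  show ?case
  proof (cases "a = Suc b")
    case True then show ?thesis by simp
  next
    case False
    then have ab: "a \<le> b" using Suc.prems by simp
    have mono: "U b \<le> U a"
      using ab Suc.prems(2) by (induction b rule: dec_induct) (auto intro: order_trans)
    have st: "U (Suc b) \<le> U b" using Suc.prems(2) ab by simp
    have s1: "{U (Suc b)<..U a} = {U (Suc b)<..U b} \<union> {U b<..U a}" using mono st by auto
    have s2: "{a<..Suc b} = insert (Suc b) {a<..b}" using ab by auto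
    have "(\<Prod>x\<in>{U (Suc b)<..U a}. f x) = (\<Prod>x\<in>{U (Suc b)<..U b}. f x) * (\<Prod>x\<in>{U b<..U a}. f x)"
      unfolding s1 by (rule prod.union_disjoint) auto
    then show ?thesis using Suc.IH[OF ab] Suc.prems unfolding s2 by simp
  qed
qed

locale qt =
  fixes q t :: "'a::field"
  assumes q0: "q \<noteq> 0" and t0: "t \<noteq> 0"
    and indep: "\<And>a b :: int. q powi a * t powi b = 1 \<Longrightarrow> a = 0 \<and> b = 0"
begin

abbreviation M where "M \<equiv> mon q t"
abbreviation K where "K \<equiv> brk q t"

lemma mon_nz[simp]: "M a b \<noteq> 0"
  unfolding mon_def using q0 t0 by (simp add: power_int_not_zero)

lemma mon_mult: "M a b * M c e = M (a + c) (b + e)"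
  unfolding mon_def using q0 t0 power_int_add[of q a c] power_int_add[of t b e] by (simp add: ac_simps)

lemma mon_00[simp]: "M 0 0 = 1" unfolding mon_def by simp

lemma mon_eq1: "M a b = 1 \<longleftrightarrow> a = 0 \<and> b = 0"
proof
  assume "M a b = 1" then show "a = 0 \<and> b = 0" using indep[of a b] unfolding mon_def by blast
qed (simp add: mon_def)

lemma brk_nz: "\<not> (a = 0 \<and> b = 0) \<Longrightarrow> K a b \<noteq> 0"
  unfolding brk_def using mon_eq1[of a b] by simp

lemma mon_diff: "M a b - M c e = M a b * K (c - a) (e - b)"
proof -
  have "M a b * M (c - a) (e - b) = M c e" by (simp add: mon_mult)
  then show ?thesis unfolding brk_def by (simp add: algebra_simps)
qed

lemma mon_eq_iff: "M a b = M c e \<longleftrightarrow> a = c \<and> b = e"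
proof
  assume "M a b = M c e"
  then have "M a b - M c e = 0" by simp
  then have "K (c - a) (e - b) = 0" by (simp add: mon_diff)
  then have "c - a = 0 \<and> e - b = 0" using brk_nz[of "c - a" "e - b"] by blast
  then show "a = c \<and> b = e" by simp
qed simp

lemma q1: "q \<noteq> 1"
proof
  assume "q = 1" then show False using indep[of 1 0] by simp
qed
lemma t1: "t \<noteq> 1"
proof
  assume "t = 1" then show False using indep[of 0 1] by simp
qed

end

lemma prod_shift1:
  fixes g :: "nat \<Rightarrow> 'a::comm_monoid_mult"
  shows "(\<Prod>i\<in>{0<..s}. g (i - 1)) = (\<Prod>i\<in>{0..<s}. g i)"
proof -
  have "{0<..s} = Suc ` {0..<s}" by (auto simp: image_iff intro!: bexI[of _ "x - 1" for x])
  then have "(\<Prod>i\<in>{0<..s}. g (i - 1)) = (\<Prod>i\<in>Suc ` {0..<s}. g (i - 1))" by simp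
  also have "\<dots> = (\<Prod>i\<in>{0..<s}. g (Suc i - 1))" by (subst prod.reindex) (simp_all add: o_def)
  finally show ?thesis by simp
qed

lemma split1:
  fixes P :: "'a::field" and N Mi :: "nat \<Rightarrow> 'a"
  assumes "s \<le> d"
  shows "(\<Prod>i\<in>{1..d}. P - N i) / (\<Prod>i\<in>{0..d} - {s}. P - Mi i) =
     (\<Prod>i\<in>{s<..d}. (P - N i) / (P - Mi i)) * (\<Prod>i\<in>{0<..s}. (P - N i) / (P - Mi (i - 1)))"
proof -
  have e1: "{1..d} = {0<..s} \<union> {s<..d}" using assms by auto
  have e2: "{0..d} - {s} = {0..<s} \<union> {s<..d}" using assms by auto
  have "(\<Prod>i\<in>{1..d}. P - N i) = (\<Prod>i\<in>{0<..s}. P - N i) * (\<Prod>i\<in>{s<..d}. P - N i)"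
    unfolding e1 by (rule prod.union_disjoint) auto
  moreover have "(\<Prod>i\<in>{0..d} - {s}. P - Mi i) = (\<Prod>i\<in>{0<..s}. P - Mi (i - 1)) * (\<Prod>i\<in>{s<..d}. P - Mi i)"
    unfolding e2 prod_shift1[of "\<lambda>i. P - Mi i"] by (rule prod.union_disjoint) auto
  ultimately show ?thesis by (simp add: prod_dividef ac_simps)
qed

lemma split2:
  fixes P :: "'a::field" and N Mi :: "nat \<Rightarrow> 'a"
  assumes "1 \<le> r" "r \<le> d"
  shows "(\<Prod>i\<in>{1..d} - {r}. P - N i) / (\<Prod>i\<in>{0..d}. P - Mi i) =
     (\<Prod>i\<in>{r<..d}. (P - N i) / (P - Mi i)) * (\<Prod>i\<in>{0<..<r}. (P - N i) / (P - Mi (i - 1)))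
       / ((P - Mi (r - 1)) * (P - Mi r))"
proof -
  have e1: "{1..d} - {r} = {0<..<r} \<union> {r<..d}" using assms by auto
  have e2: "{0..d} = insert r (insert (r - 1) ({0..<r - 1} \<union> {r<..d}))" using assms by auto
  have sh: "{0<..<r} = {0<..r - 1}" using assms by auto
  have "(\<Prod>i\<in>{1..d} - {r}. P - N i) = (\<Prod>i\<in>{0<..<r}. P - N i) * (\<Prod>i\<in>{r<..d}. P - N i)"
    unfolding e1 by (rule prod.union_disjoint) auto
  moreover have "(\<Prod>i\<in>{0..d}. P - Mi i) =
      (P - Mi r) * ((P - Mi (r - 1)) * ((\<Prod>i\<in>{0<..<r}. P - Mi (i - 1)) * (\<Prod>i\<in>{r<..d}. P - Mi i)))"
  proof -
    have "(\<Prod>i\<in>{0..<r - 1} \<union> {r<..d}. P - Mi i) = (\<Prod>i\<in>{0..<r - 1}. P - Mi i) * (\<Prod>i\<in>{r<..d}. P - Mi i)"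
      by (rule prod.union_disjoint) auto
    moreover have "(\<Prod>i\<in>{0<..<r}. P - Mi (i - 1)) = (\<Prod>i\<in>{0..<r - 1}. P - Mi i)"
      unfolding sh by (rule prod_shift1)
    moreover have "r \<notin> insert (r - 1) ({0..<r - 1} \<union> {r<..d})" "r - 1 \<notin> {0..<r - 1} \<union> {r<..d}"
      using assms by auto
    ultimately show ?thesis unfolding e2 by (simp add: prod.insert)
  qed
  ultimately show ?thesis by (simp add: prod_dividef algebra_simps)
qed

context qt
begin

lemma fac_hi: "(M a b - M c1 e1) / (M a b - M c2 e2) = K (c1 - a) (e1 - b) / K (c2 - a) (e2 - b)"
  by (simp add: mon_diff)

lemma fac_lo: "(M a b - M c1 e1) / (M a b - M c2 e2) = M (c1 - c2) (e1 - e2) * (K (a - c1) (b - e1) / K (a - c2) (b - e2))"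
proof -
  have h1: "M a b - M c1 e1 = - (M c1 e1 * K (a - c1) (b - e1))" using mon_diff[of c1 e1 a b] by (metis minus_diff_eq)
  have h2: "M a b - M c2 e2 = - (M c2 e2 * K (a - c2) (b - e2))" using mon_diff[of c2 e2 a b] by (metis minus_diff_eq)
  have h3: "M c1 e1 / M c2 e2 = M (c1 - c2) (e1 - e2)"
    using mon_mult[of "c1 - c2" "e1 - e2" c2 e2] by (simp add: field_simps)
  have "(M a b - M c1 e1) / (M a b - M c2 e2) = (M c1 e1 * K (a - c1) (b - e1)) / (M c2 e2 * K (a - c2) (b - e2))"
    unfolding h1 h2 by (rule minus_divide_divide)
  also have "\<dots> = (M c1 e1 / M c2 e2) * (K (a - c1) (b - e1) / K (a - c2) (b - e2))"
    by (rule times_divide_times_eq[symmetric])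
  finally show ?thesis unfolding h3 .
qed

lemma mon_tele: fixes Y :: "nat \<Rightarrow> int" shows "(\<Prod>i\<in>{0<..s}. M 0 (Y i - Y (i - 1))) = M 0 (Y s - Y 0)"
proof (induction s)
  case 0 then show ?case by simp
next
  case (Suc s)
  have "{0<..Suc s} = insert (Suc s) {0<..s}" by auto
  then show ?case using Suc mon_mult[of 0 "Y (Suc s) - Y s" 0 "Y s - Y 0"] by simp
qed

end

context qt
begin

lemma R_form:
  fixes X Y :: "nat \<Rightarrow> int"
  assumes "s \<le> d"
  shows "(\<Prod>i\<in>{1..d}. M a b - M (X (i - 1)) (Y i)) / (\<Prod>i\<in>{0..d} - {s}. M a b - M (X i) (Y i)) =
    (\<Prod>i\<in>{s<..d}. K (X (i - 1) - a) (Y i - b) / K (X i - a) (Y i - b)) *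
    (M 0 (Y s - Y 0) * (\<Prod>i\<in>{0<..s}. K (a - X (i - 1)) (b - Y i) / K (a - X (i - 1)) (b - Y (i - 1))))"
proof -
  have "(\<Prod>i\<in>{1..d}. M a b - M (X (i - 1)) (Y i)) / (\<Prod>i\<in>{0..d} - {s}. M a b - M (X i) (Y i)) =
     (\<Prod>i\<in>{s<..d}. (M a b - M (X (i - 1)) (Y i)) / (M a b - M (X i) (Y i))) *
     (\<Prod>i\<in>{0<..s}. (M a b - M (X (i - 1)) (Y i)) / (M a b - M (X (i - 1)) (Y (i - 1))))"
    by (rule split1[OF assms])
  also have "(\<Prod>i\<in>{s<..d}. (M a b - M (X (i - 1)) (Y i)) / (M a b - M (X i) (Y i))) =
      (\<Prod>i\<in>{s<..d}. K (X (i - 1) - a) (Y i - b) / K (X i - a) (Y i - b))"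
    by (simp add: fac_hi)
  also have "(\<Prod>i\<in>{0<..s}. (M a b - M (X (i - 1)) (Y i)) / (M a b - M (X (i - 1)) (Y (i - 1)))) =
      (\<Prod>i\<in>{0<..s}. M 0 (Y i - Y (i - 1)) * (K (a - X (i - 1)) (b - Y i) / K (a - X (i - 1)) (b - Y (i - 1))))"
    by (simp add: fac_lo)
  also have "\<dots> = M 0 (Y s - Y 0) * (\<Prod>i\<in>{0<..s}. K (a - X (i - 1)) (b - Y i) / K (a - X (i - 1)) (b - Y (i - 1)))"
    by (simp only: prod.distrib mon_tele)
  finally show ?thesis .
qed

lemma R2_form:
  fixes X Y :: "nat \<Rightarrow> int"
  assumes "1 \<le> r" "r \<le> d"
  shows "(\<Prod>i\<in>{1..d} - {r}. M a b - M (X (i - 1)) (Y i)) / (\<Prod>i\<in>{0..d}. M a b - M (X i) (Y i)) =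
    (\<Prod>i\<in>{r<..d}. K (X (i - 1) - a) (Y i - b) / K (X i - a) (Y i - b)) *
    (M 0 (Y (r - 1) - Y 0) * (\<Prod>i\<in>{0<..<r}. K (a - X (i - 1)) (b - Y i) / K (a - X (i - 1)) (b - Y (i - 1))))
    / ((M a b - M (X (r - 1)) (Y (r - 1))) * (M a b - M (X r) (Y r)))"
proof -
  have sh: "{0<..<r} = {0<..r - 1}" using assms by auto
  have "(\<Prod>i\<in>{1..d} - {r}. M a b - M (X (i - 1)) (Y i)) / (\<Prod>i\<in>{0..d}. M a b - M (X i) (Y i)) =
     (\<Prod>i\<in>{r<..d}. (M a b - M (X (i - 1)) (Y i)) / (M a b - M (X i) (Y i))) *
     (\<Prod>i\<in>{0<..<r}. (M a b - M (X (i - 1)) (Y i)) / (M a b - M (X (i - 1)) (Y (i - 1))))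
     / ((M a b - M (X (r - 1)) (Y (r - 1))) * (M a b - M (X r) (Y r)))"
    by (rule split2[OF assms])
  also have "(\<Prod>i\<in>{r<..d}. (M a b - M (X (i - 1)) (Y i)) / (M a b - M (X i) (Y i))) =
      (\<Prod>i\<in>{r<..d}. K (X (i - 1) - a) (Y i - b) / K (X i - a) (Y i - b))"
    by (simp add: fac_hi)
  also have "(\<Prod>i\<in>{0<..<r}. (M a b - M (X (i - 1)) (Y i)) / (M a b - M (X (i - 1)) (Y (i - 1)))) =
      (\<Prod>i\<in>{0<..<r}. M 0 (Y i - Y (i - 1)) * (K (a - X (i - 1)) (b - Y i) / K (a - X (i - 1)) (b - Y (i - 1))))"
    by (simp add: fac_lo)
  also have "\<dots> = M 0 (Y (r - 1) - Y 0) * (\<Prod>i\<in>{0<..<r}. K (a - X (i - 1)) (b - Y i) / K (a - X (i - 1)) (b - Y (i - 1)))"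
    by (simp only: prod.distrib mon_tele sh)
  finally show ?thesis .
qed

end

locale main = part lam + qt q t for lam :: "nat list" and q t :: "'a::field"
begin

definition XX :: "nat \<Rightarrow> int" where "XX i = int (U 1) - int (U (Suc i))"
definition YY :: "nat \<Rightarrow> int" where "YY i = int (V i)"

lemma col_prod:
  fixes F :: "nat \<Rightarrow> 'a" and H :: "nat \<Rightarrow> nat \<Rightarrow> 'a"
  assumes "s \<le> d"
    and F: "\<And>j x. s < j \<Longrightarrow> j \<le> d \<Longrightarrow> U (Suc j) < x \<Longrightarrow> x \<le> U j \<Longrightarrow> F x = H j x / H j (x - 1)"
    and nz: "\<And>j x. s < j \<Longrightarrow> j \<le> d \<Longrightarrow> U (Suc j) \<le> x \<Longrightarrow> x \<le> U j \<Longrightarrow> H j x \<noteq> 0"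
  shows "(\<Prod>x\<in>{0<..U (Suc s)}. F x) = (\<Prod>j\<in>{s<..d}. H j (U j) / H j (U (Suc j)))"
proof -
  have "(\<Prod>x\<in>{U (Suc d)<..U (Suc s)}. F x) = (\<Prod>j\<in>{s<..d}. \<Prod>x\<in>{U (Suc j)<..U (Suc (j - 1))}. F x)"
    by (rule blocks_dec[where U="\<lambda>j. U (Suc j)"]) (use assms(1) U_mono in auto)
  also have "\<dots> = (\<Prod>j\<in>{s<..d}. H j (U j) / H j (U (Suc j)))"
  proof (rule prod.cong[OF refl])
    fix j assume j: "j \<in> {s<..d}"
    then have sj: "Suc (j - 1) = j" by auto
    have "(\<Prod>x\<in>{U (Suc j)<..U j}. F x) = (\<Prod>x\<in>{U (Suc j)<..U j}. H j x / H j (x - 1))"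
      by (rule prod.cong[OF refl]) (use j F in auto)
    also have "\<dots> = H j (U j) / H j (U (Suc j))"
      by (rule tele) (use j nz U_mono[of j "Suc j"] in auto)
    finally show "(\<Prod>x\<in>{U (Suc j)<..U (Suc (j - 1))}. F x) = H j (U j) / H j (U (Suc j))" unfolding sj .
  qed
  finally show ?thesis using U_zero[of "Suc d"] by simp
qed

lemma row_prod:
  fixes F :: "nat \<Rightarrow> 'a" and G :: "nat \<Rightarrow> nat \<Rightarrow> 'a"
  assumes "s \<le> d"
    and F: "\<And>j y. 0 < j \<Longrightarrow> j \<le> s \<Longrightarrow> V (j - 1) < y \<Longrightarrow> y \<le> V j \<Longrightarrow> F y = G j y / G j (y - 1)"
    and nz: "\<And>j y. 0 < j \<Longrightarrow> j \<le> s \<Longrightarrow> V (j - 1) \<le> y \<Longrightarrow> y \<le> V j \<Longrightarrow> G j y \<noteq> 0"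
  shows "(\<Prod>y\<in>{0<..V s}. F y) = (\<Prod>j\<in>{0<..s}. G j (V j) / G j (V (j - 1)))"
proof -
  have "(\<Prod>y\<in>{V 0<..V s}. F y) = (\<Prod>j\<in>{0<..s}. \<Prod>y\<in>{V (j - 1)<..V j}. F y)"
    by (rule blocks_inc) (use V_mono in auto)
  also have "\<dots> = (\<Prod>j\<in>{0<..s}. G j (V j) / G j (V (j - 1)))"
  proof (rule prod.cong[OF refl])
    fix j assume j: "j \<in> {0<..s}"
    have "(\<Prod>y\<in>{V (j - 1)<..V j}. F y) = (\<Prod>y\<in>{V (j - 1)<..V j}. G j y / G j (y - 1))"
      by (rule prod.cong[OF refl]) (use j F in auto)
    also have "\<dots> = G j (V j) / G j (V (j - 1))"
      by (rule tele) (use j nz V_mono[of "j - 1" j] in auto)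
    finally show "(\<Prod>y\<in>{V (j - 1)<..V j}. F y) = G j (V j) / G j (V (j - 1))" .
  qed
  finally show ?thesis by simp
qed

lemma V_lt: assumes "i < j" "j \<le> d" shows "V i < V j"
proof -
  have "V i \<le> V (j - 1)" using V_mono[of i "j - 1"] assms by simp
  moreover have "V (j - 1) < V j" using V_strict[of j] assms by simp
  ultimately show ?thesis by simp
qed

lemma U_lt: "1 \<le> i \<Longrightarrow> i < j \<Longrightarrow> j \<le> Suc d \<Longrightarrow> U j < U i"
  using U_Suc_lt_iff[of i "j - 1"] by simp

lemma addcell_plus:
  assumes "s \<le> d"
  shows "addcell lam (lam_plus lam s) (Suc (U (Suc s))) (Suc (V s))"
proof
  show "\<And>y. prt (lam_plus lam s) y = (if y = Suc (V s) then Suc (U (Suc s)) else prt lam y)"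
    using prt_plus[OF assms] by simp
  show "prt lam (Suc (V s)) = Suc (U (Suc s)) - 1"
  proof (cases "s < d")
    case True
    then show ?thesis using prt_block[of "Suc s" "Suc (V s)"] V_lt[of s "Suc s"] by simp
  next
    case False
    then show ?thesis using assms V_d prt_beyond[of lam "Suc (V s)"] U_zero[of "Suc s"] by simp
  qed
  show "\<And>y. 0 < y \<Longrightarrow> (Suc (U (Suc s)) \<le> prt lam y) = (y < Suc (V s))"
    using prt_gt[OF assms] by (simp add: Suc_le_eq less_Suc_eq_le)
qed simp_all

lemma alpha_nu:
  assumes s: "s \<le> d"
  shows "alpha q t (lam_plus lam s) lam =
    (\<Prod>j\<in>{s<..d}. K (XX (j - 1) - XX s) (YY j - YY s) / K (XX j - XX s) (YY j - YY s)) *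
    (\<Prod>j\<in>{0<..s}. K (XX s - XX (j - 1)) (YY s - YY j) / K (XX s - XX (j - 1)) (YY s - YY (j - 1)))"
proof -
  interpret ac: addcell lam "lam_plus lam s" "Suc (U (Suc s))" "Suc (V s)" by (rule addcell_plus[OF s])
  have e1: "{0<..<Suc (U (Suc s))} = {0<..U (Suc s)}" by auto
  have e2: "{0<..<Suc (V s)} = {0<..V s}" by auto
  have c: "(\<Prod>x\<in>{0<..U (Suc s)}.
      K (int (Suc (U (Suc s))) - 1 - int x) (int (conjp lam x) - int (Suc (V s)) + 1) /
      K (int (Suc (U (Suc s))) - int x) (int (conjp lam x) - int (Suc (V s)) + 1)) =
    (\<Prod>j\<in>{s<..d}. K (XX (j - 1) - XX s) (YY j - YY s) / K (XX j - XX s) (YY j - YY s))"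
  proof -
    have "(\<Prod>x\<in>{0<..U (Suc s)}.
      K (int (Suc (U (Suc s))) - 1 - int x) (int (conjp lam x) - int (Suc (V s)) + 1) /
      K (int (Suc (U (Suc s))) - int x) (int (conjp lam x) - int (Suc (V s)) + 1)) =
      (\<Prod>j\<in>{s<..d}. K (int (U (Suc s)) - int (U j)) (int (V j) - int (V s)) /
                     K (int (U (Suc s)) - int (U (Suc j))) (int (V j) - int (V s)))"
    proof (rule col_prod[OF s])
      fix j x assume jx: "s < j" "j \<le> d" "U (Suc j) < x" "x \<le> U j"
      have cj: "conjp lam x = V j" by (rule conjp_block) (use jx in auto)
      show "K (int (Suc (U (Suc s))) - 1 - int x) (int (conjp lam x) - int (Suc (V s)) + 1) /
            K (int (Suc (U (Suc s))) - int x) (int (conjp lam x) - int (Suc (V s)) + 1) =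
            K (int (U (Suc s)) - int x) (int (V j) - int (V s)) /
            K (int (U (Suc s)) - int (x - 1)) (int (V j) - int (V s))"
        using jx by (simp add: cj of_nat_diff algebra_simps)
    next
      fix j x assume jx: "s < j" "j \<le> d" "U (Suc j) \<le> x" "x \<le> U j"
      show "K (int (U (Suc s)) - int x) (int (V j) - int (V s)) \<noteq> 0"
        by (rule brk_nz) (use V_lt[of s j] jx in auto)
    qed
    also have "\<dots> = (\<Prod>j\<in>{s<..d}. K (XX (j - 1) - XX s) (YY j - YY s) / K (XX j - XX s) (YY j - YY s))"
      by (rule prod.cong[OF refl]) (auto simp: XX_def YY_def)
    finally show ?thesis .
  qed
  have r: "(\<Prod>y\<in>{0<..V s}.
      K (int (prt lam y) - int (Suc (U (Suc s))) + 1) (int (Suc (V s)) - 1 - int y) /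
      K (int (prt lam y) - int (Suc (U (Suc s))) + 1) (int (Suc (V s)) - int y)) =
    (\<Prod>j\<in>{0<..s}. K (XX s - XX (j - 1)) (YY s - YY j) / K (XX s - XX (j - 1)) (YY s - YY (j - 1)))"
  proof -
    have "(\<Prod>y\<in>{0<..V s}.
      K (int (prt lam y) - int (Suc (U (Suc s))) + 1) (int (Suc (V s)) - 1 - int y) /
      K (int (prt lam y) - int (Suc (U (Suc s))) + 1) (int (Suc (V s)) - int y)) =
      (\<Prod>j\<in>{0<..s}. K (int (U j) - int (U (Suc s))) (int (V s) - int (V j)) /
                     K (int (U j) - int (U (Suc s))) (int (V s) - int (V (j - 1))))"
    proof (rule row_prod[OF s])
      fix j y assume jy: "0 < j" "j \<le> s" "V (j - 1) < y" "y \<le> V j"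
      have pj: "prt lam y = U j" by (rule prt_block) (use jy s in auto)
      show "K (int (prt lam y) - int (Suc (U (Suc s))) + 1) (int (Suc (V s)) - 1 - int y) /
            K (int (prt lam y) - int (Suc (U (Suc s))) + 1) (int (Suc (V s)) - int y) =
            K (int (U j) - int (U (Suc s))) (int (V s) - int y) /
            K (int (U j) - int (U (Suc s))) (int (V s) - int (y - 1))"
        using jy by (simp add: pj of_nat_diff algebra_simps)
    next
      fix j y assume jy: "0 < j" "j \<le> s" "V (j - 1) \<le> y" "y \<le> V j"
      show "K (int (U j) - int (U (Suc s))) (int (V s) - int y) \<noteq> 0"
        by (rule brk_nz) (use U_lt[of j "Suc s"] jy s in auto)
    qed
    also have "\<dots> = (\<Prod>j\<in>{0<..s}. K (XX s - XX (j - 1)) (YY s - YY j) / K (XX s - XX (j - 1)) (YY s - YY (j - 1)))"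
      by (rule prod.cong[OF refl]) (auto simp: XX_def YY_def)
    finally show ?thesis .
  qed
  show ?thesis unfolding ac.alpha_eq e1 e2 c r ..
qed

end

context main
begin

lemma alphabar_nu:
  assumes s: "s \<le> d"
  shows "alphabar q t (lam_plus lam s) lam =
    (\<Prod>j\<in>{s<..d}. K (XX (j - 1) - (XX s - 1)) (YY j - (YY s + 1)) / K (XX j - (XX s - 1)) (YY j - (YY s + 1))) *
    (\<Prod>j\<in>{0<..s}. K ((XX s - 1) - XX (j - 1)) ((YY s + 1) - YY j) / K ((XX s - 1) - XX (j - 1)) ((YY s + 1) - YY (j - 1)))"
proof -
  interpret ac: addcell lam "lam_plus lam s" "Suc (U (Suc s))" "Suc (V s)" by (rule addcell_plus[OF s])
  have e1: "{0<..<Suc (U (Suc s))} = {0<..U (Suc s)}" by auto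
  have e2: "{0<..<Suc (V s)} = {0<..V s}" by auto
  have c: "(\<Prod>x\<in>{0<..U (Suc s)}.
      K (int (Suc (U (Suc s))) - int x) (int (conjp lam x) - int (Suc (V s))) /
      K (int (Suc (U (Suc s))) - int x + 1) (int (conjp lam x) - int (Suc (V s)))) =
    (\<Prod>j\<in>{s<..d}. K (XX (j - 1) - (XX s - 1)) (YY j - (YY s + 1)) / K (XX j - (XX s - 1)) (YY j - (YY s + 1)))"
  proof -
    have "(\<Prod>x\<in>{0<..U (Suc s)}.
      K (int (Suc (U (Suc s))) - int x) (int (conjp lam x) - int (Suc (V s))) /
      K (int (Suc (U (Suc s))) - int x + 1) (int (conjp lam x) - int (Suc (V s)))) =
      (\<Prod>j\<in>{s<..d}. K (int (U (Suc s)) + 1 - int (U j)) (int (V j) - int (V s) - 1) /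
                     K (int (U (Suc s)) + 1 - int (U (Suc j))) (int (V j) - int (V s) - 1))"
    proof (rule col_prod[OF s])
      fix j x assume jx: "s < j" "j \<le> d" "U (Suc j) < x" "x \<le> U j"
      have cj: "conjp lam x = V j" by (rule conjp_block) (use jx in auto)
      show "K (int (Suc (U (Suc s))) - int x) (int (conjp lam x) - int (Suc (V s))) /
            K (int (Suc (U (Suc s))) - int x + 1) (int (conjp lam x) - int (Suc (V s))) =
            K (int (U (Suc s)) + 1 - int x) (int (V j) - int (V s) - 1) /
            K (int (U (Suc s)) + 1 - int (x - 1)) (int (V j) - int (V s) - 1)"
        using jx by (simp add: cj of_nat_diff algebra_simps)
    next
      fix j x assume jx: "s < j" "j \<le> d" "U (Suc j) \<le> x" "x \<le> U j"
      have "U j \<le> U (Suc s)" using U_mono[of "Suc s" j] jx by simp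
      then show "K (int (U (Suc s)) + 1 - int x) (int (V j) - int (V s) - 1) \<noteq> 0"
        by (intro brk_nz) (use jx in auto)
    qed
    also have "\<dots> = (\<Prod>j\<in>{s<..d}. K (XX (j - 1) - (XX s - 1)) (YY j - (YY s + 1)) / K (XX j - (XX s - 1)) (YY j - (YY s + 1)))"
      by (rule prod.cong[OF refl]) (auto simp: XX_def YY_def algebra_simps)
    finally show ?thesis .
  qed
  have r: "(\<Prod>y\<in>{0<..V s}.
      K (int (prt lam y) - int (Suc (U (Suc s)))) (int (Suc (V s)) - int y) /
      K (int (prt lam y) - int (Suc (U (Suc s)))) (int (Suc (V s)) - int y + 1)) =
    (\<Prod>j\<in>{0<..s}. K ((XX s - 1) - XX (j - 1)) ((YY s + 1) - YY j) / K ((XX s - 1) - XX (j - 1)) ((YY s + 1) - YY (j - 1)))"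
  proof -
    have "(\<Prod>y\<in>{0<..V s}.
      K (int (prt lam y) - int (Suc (U (Suc s)))) (int (Suc (V s)) - int y) /
      K (int (prt lam y) - int (Suc (U (Suc s)))) (int (Suc (V s)) - int y + 1)) =
      (\<Prod>j\<in>{0<..s}. K (int (U j) - int (U (Suc s)) - 1) (int (V s) + 1 - int (V j)) /
                     K (int (U j) - int (U (Suc s)) - 1) (int (V s) + 1 - int (V (j - 1))))"
    proof (rule row_prod[OF s])
      fix j y assume jy: "0 < j" "j \<le> s" "V (j - 1) < y" "y \<le> V j"
      have pj: "prt lam y = U j" by (rule prt_block) (use jy s in auto)
      show "K (int (prt lam y) - int (Suc (U (Suc s)))) (int (Suc (V s)) - int y) /
            K (int (prt lam y) - int (Suc (U (Suc s)))) (int (Suc (V s)) - int y + 1) =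
            K (int (U j) - int (U (Suc s)) - 1) (int (V s) + 1 - int y) /
            K (int (U j) - int (U (Suc s)) - 1) (int (V s) + 1 - int (y - 1))"
        using jy by (simp add: pj of_nat_diff algebra_simps)
    next
      fix j y assume jy: "0 < j" "j \<le> s" "V (j - 1) \<le> y" "y \<le> V j"
      have "V j \<le> V s" using V_mono jy by simp
      then show "K (int (U j) - int (U (Suc s)) - 1) (int (V s) + 1 - int y) \<noteq> 0"
        by (intro brk_nz) (use jy in auto)
    qed
    also have "\<dots> = (\<Prod>j\<in>{0<..s}. K ((XX s - 1) - XX (j - 1)) ((YY s + 1) - YY j) / K ((XX s - 1) - XX (j - 1)) ((YY s + 1) - YY (j - 1)))"
      by (rule prod.cong[OF refl]) (auto simp: XX_def YY_def algebra_simps)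
    finally show ?thesis .
  qed
  show ?thesis unfolding ac.alphabar_eq e1 e2 c r ..
qed

lemma nn_skew_plus: "s \<le> d \<Longrightarrow> nn_skew (lam_plus lam s) lam = YY s"
proof -
  assume s: "s \<le> d"
  interpret ac: addcell lam "lam_plus lam s" "Suc (U (Suc s))" "Suc (V s)" by (rule addcell_plus[OF s])
  show ?thesis using ac.nn_skew_eq by (simp add: YY_def)
qed

lemma nn'_skew_plus: "s \<le> d \<Longrightarrow> nn'_skew (lam_plus lam s) lam = int (U (Suc s))"
proof -
  assume s: "s \<le> d"
  interpret ac: addcell lam "lam_plus lam s" "Suc (U (Suc s))" "Suc (V s)" by (rule addcell_plus[OF s])
  show ?thesis using ac.nn'_skew_eq by simp
qed

lemma YY0[simp]: "YY 0 = 0" unfolding YY_def by simp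

lemma tpow: "t powi k = M 0 k" unfolding mon_def by simp

lemma pp0:
  assumes s: "s \<le> d"
  shows "pp q t lam 0 s = (\<Prod>i\<in>{1..d}. M (XX s) (YY s) - M (XX (i - 1)) (YY i)) /
                          (\<Prod>i\<in>{0..d} - {s}. M (XX s) (YY s) - M (XX i) (YY i))"
  unfolding pp_def P1_def nn_skew_plus[OF s] alpha_nu[OF s] R_form[OF s] tpow by simp

lemma ppbar0:
  assumes s: "s \<le> d"
  shows "ppbar q t lam 0 s = (\<Prod>i\<in>{1..d}. M (XX s - 1) (YY s + 1) - M (XX (i - 1)) (YY i)) /
                          (\<Prod>i\<in>{0..d} - {s}. M (XX s - 1) (YY s + 1) - M (XX i) (YY i))"
  unfolding ppbar_def P1bar_def nn_skew_plus[OF s] alphabar_nu[OF s] R_form[OF s] tpow by simp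

end

context main
begin

lemma addcell_minus:
  assumes r: "1 \<le> r" "r \<le> d"
  shows "addcell (lam_minus lam r) lam (U r) (V r)"
proof
  show "0 < U r" using U_pos r by simp
  show "0 < V r" using V_strict[of r] r by simp
  have pr: "prt lam (V r) = U r" using prt_block[of r "V r"] V_strict[of r] r by simp
  show "\<And>y. prt lam y = (if y = V r then U r else prt (lam_minus lam r) y)"
    using prt_minus[OF r] pr by simp
  show "prt (lam_minus lam r) (V r) = U r - 1" using prt_minus[OF r] by simp
  show "\<And>y. 0 < y \<Longrightarrow> (U r \<le> prt (lam_minus lam r) y) = (y < V r)"
    using prt_minus[OF r] prt_ge[OF r] U_pos[OF r] by auto
qed

lemma U_r_Suc: "1 \<le> r \<Longrightarrow> r \<le> d \<Longrightarrow> U (Suc r) \<le> U r - 1"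
  using U_Suc_lt[of r] by simp

lemma alpha_mu:
  assumes r: "1 \<le> r" "r \<le> d"
  shows "alpha q t lam (lam_minus lam r) =
    (K 0 1 / K (XX r - (XX (r - 1) + 1)) (YY r - (YY r - 1))) *
    (\<Prod>j\<in>{r<..d}. K (XX (j - 1) - (XX (r - 1) + 1)) (YY j - (YY r - 1)) / K (XX j - (XX (r - 1) + 1)) (YY j - (YY r - 1))) *
    (\<Prod>j\<in>{0<..<r}. K ((XX (r - 1) + 1) - XX (j - 1)) ((YY r - 1) - YY j) / K ((XX (r - 1) + 1) - XX (j - 1)) ((YY r - 1) - YY (j - 1))) *
    (K 1 0 / K ((XX (r - 1) + 1) - XX (r - 1)) ((YY r - 1) - YY (r - 1)))"
proof -
  interpret ac: addcell "lam_minus lam r" lam "U r" "V r" by (rule addcell_minus[OF r])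
  have sr: "Suc (r - 1) = r" using r by simp
  let ?F = "\<lambda>x. K (int (U r) - 1 - int x) (int (conjp (lam_minus lam r) x) - int (V r) + 1) /
                K (int (U r) - int x) (int (conjp (lam_minus lam r) x) - int (V r) + 1)"
  let ?G = "\<lambda>y. K (int (prt (lam_minus lam r) y) - int (U r) + 1) (int (V r) - 1 - int y) /
                K (int (prt (lam_minus lam r) y) - int (U r) + 1) (int (V r) - int y)"
  have cj: "conjp (lam_minus lam r) x = conjp lam x" if "x < U r" for x
    using ac.conj_rh[of x] that by simp
  have pj: "prt (lam_minus lam r) y = prt lam y" if "y < V r" for y
    using ac.hrh[of y] that by simp
  have ec: "{0<..<U r} = {0<..U (Suc r)} \<union> {U (Suc r)<..U r - 1}" using U_r_Suc[OF r] by auto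
  have er: "{0<..<V r} = {0<..V (r - 1)} \<union> {V (r - 1)<..V r - 1}" using V_strict[of r] r by auto
  have c1: "(\<Prod>x\<in>{0<..U (Suc r)}. ?F x) =
    (\<Prod>j\<in>{r<..d}. K (XX (j - 1) - (XX (r - 1) + 1)) (YY j - (YY r - 1)) / K (XX j - (XX (r - 1) + 1)) (YY j - (YY r - 1)))"
  proof -
    have "(\<Prod>x\<in>{0<..U (Suc r)}. ?F x) =
      (\<Prod>j\<in>{r<..d}. K (int (U r) - 1 - int (U j)) (int (V j) - int (V r) + 1) /
                     K (int (U r) - 1 - int (U (Suc j))) (int (V j) - int (V r) + 1))"
    proof (rule col_prod[OF r(2)])
      fix j x assume jx: "r < j" "j \<le> d" "U (Suc j) < x" "x \<le> U j"
      have "U j < U r" using U_lt[of r j] jx r by simp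
      then have c: "conjp (lam_minus lam r) x = V j"
        using cj[of x] conjp_block[of x j] jx by simp
      show "?F x = K (int (U r) - 1 - int x) (int (V j) - int (V r) + 1) /
            K (int (U r) - 1 - int (x - 1)) (int (V j) - int (V r) + 1)"
        using jx by (simp add: c of_nat_diff algebra_simps)
    next
      fix j x assume jx: "r < j" "j \<le> d" "U (Suc j) \<le> x" "x \<le> U j"
      have "V r < V j" using V_lt jx by simp
      then show "K (int (U r) - 1 - int x) (int (V j) - int (V r) + 1) \<noteq> 0"
        by (intro brk_nz) auto
    qed
    also have "\<dots> = (\<Prod>j\<in>{r<..d}. K (XX (j - 1) - (XX (r - 1) + 1)) (YY j - (YY r - 1)) / K (XX j - (XX (r - 1) + 1)) (YY j - (YY r - 1)))"
      by (rule prod.cong[OF refl]) (use r in \<open>auto simp: XX_def YY_def algebra_simps\<close>)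
    finally show ?thesis .
  qed
  have c2: "(\<Prod>x\<in>{U (Suc r)<..U r - 1}. ?F x) = K 0 1 / K (XX r - (XX (r - 1) + 1)) (YY r - (YY r - 1))"
  proof -
    have "(\<Prod>x\<in>{U (Suc r)<..U r - 1}. ?F x) = (\<Prod>x\<in>{U (Suc r)<..U r - 1}. K (int (U r) - 1 - int x) 1 / K (int (U r) - 1 - int (x - 1)) 1)"
    proof (rule prod.cong[OF refl])
      fix x assume x: "x \<in> {U (Suc r)<..U r - 1}"
      have c: "conjp (lam_minus lam r) x = V r"
        using cj[of x] conjp_block[of x r] x r by auto
      show "?F x = K (int (U r) - 1 - int x) 1 / K (int (U r) - 1 - int (x - 1)) 1"
        using x by (simp add: c of_nat_diff algebra_simps)
    qed
    also have "\<dots> = K (int (U r) - 1 - int (U r - 1)) 1 / K (int (U r) - 1 - int (U (Suc r))) 1"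
      by (rule tele[where H="\<lambda>x. K (int (U r) - 1 - int x) 1"]) (use U_r_Suc[OF r] in \<open>auto simp: brk_nz\<close>)
    also have "\<dots> = K 0 1 / K (XX r - (XX (r - 1) + 1)) (YY r - (YY r - 1))"
      using U_pos[OF r] sr by (simp add: XX_def of_nat_diff algebra_simps)
    finally show ?thesis .
  qed
  have r1: "(\<Prod>y\<in>{0<..V (r - 1)}. ?G y) =
    (\<Prod>j\<in>{0<..<r}. K ((XX (r - 1) + 1) - XX (j - 1)) ((YY r - 1) - YY j) / K ((XX (r - 1) + 1) - XX (j - 1)) ((YY r - 1) - YY (j - 1)))"
  proof -
    have "(\<Prod>y\<in>{0<..V (r - 1)}. ?G y) =
      (\<Prod>j\<in>{0<..r - 1}. K (int (U j) - int (U r) + 1) (int (V r) - 1 - int (V j)) /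
                     K (int (U j) - int (U r) + 1) (int (V r) - 1 - int (V (j - 1))))"
    proof (rule row_prod)
      show "r - 1 \<le> d" using r by simp
      fix j y assume jy: "0 < j" "j \<le> r - 1" "V (j - 1) < y" "y \<le> V j"
      have "V j < V r" using V_lt[of j r] jy r by simp
      then have p: "prt (lam_minus lam r) y = U j"
        using pj[of y] prt_block[of j y] jy r by simp
      show "?G y = K (int (U j) - int (U r) + 1) (int (V r) - 1 - int y) /
            K (int (U j) - int (U r) + 1) (int (V r) - 1 - int (y - 1))"
        using jy by (simp add: p of_nat_diff algebra_simps)
    next
      fix j y assume jy: "0 < j" "j \<le> r - 1" "V (j - 1) \<le> y" "y \<le> V j"
      have "U r < U j" using U_lt[of j r] jy r by simp
      then show "K (int (U j) - int (U r) + 1) (int (V r) - 1 - int y) \<noteq> 0"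
        by (intro brk_nz) auto
    qed
    also have "\<dots> = (\<Prod>j\<in>{0<..<r}. K ((XX (r - 1) + 1) - XX (j - 1)) ((YY r - 1) - YY j) / K ((XX (r - 1) + 1) - XX (j - 1)) ((YY r - 1) - YY (j - 1)))"
    proof -
      have "{0<..r - 1} = {0<..<r}" using r by auto
      then show ?thesis
        by (intro prod.cong) (use r sr in \<open>auto simp: XX_def YY_def algebra_simps\<close>)
    qed
    finally show ?thesis .
  qed
  have r2: "(\<Prod>y\<in>{V (r - 1)<..V r - 1}. ?G y) = K 1 0 / K ((XX (r - 1) + 1) - XX (r - 1)) ((YY r - 1) - YY (r - 1))"
  proof -
    have vv: "V (r - 1) < V r" using V_strict[of r] r by simp
    have "(\<Prod>y\<in>{V (r - 1)<..V r - 1}. ?G y) = (\<Prod>y\<in>{V (r - 1)<..V r - 1}. K 1 (int (V r) - 1 - int y) / K 1 (int (V r) - 1 - int (y - 1)))"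
    proof (rule prod.cong[OF refl])
      fix y assume y: "y \<in> {V (r - 1)<..V r - 1}"
      have p: "prt (lam_minus lam r) y = U r"
        using pj[of y] prt_block[of r y] y r by auto
      show "?G y = K 1 (int (V r) - 1 - int y) / K 1 (int (V r) - 1 - int (y - 1))"
        using y by (simp add: p of_nat_diff algebra_simps)
    qed
    also have "\<dots> = K 1 (int (V r) - 1 - int (V r - 1)) / K 1 (int (V r) - 1 - int (V (r - 1)))"
      by (rule tele[where H="\<lambda>y. K 1 (int (V r) - 1 - int y)"]) (use vv in \<open>auto simp: brk_nz\<close>)
    also have "\<dots> = K 1 0 / K ((XX (r - 1) + 1) - XX (r - 1)) ((YY r - 1) - YY (r - 1))"
      using vv by (simp add: YY_def of_nat_diff algebra_simps)
    finally show ?thesis .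
  qed
  have "alpha q t lam (lam_minus lam r) = (\<Prod>x\<in>{0<..<U r}. ?F x) * (\<Prod>y\<in>{0<..<V r}. ?G y)"
    by (rule ac.alpha_eq)
  also have "(\<Prod>x\<in>{0<..<U r}. ?F x) = (\<Prod>x\<in>{0<..U (Suc r)}. ?F x) * (\<Prod>x\<in>{U (Suc r)<..U r - 1}. ?F x)"
    unfolding ec by (rule prod.union_disjoint) auto
  also have "(\<Prod>y\<in>{0<..<V r}. ?G y) = (\<Prod>y\<in>{0<..V (r - 1)}. ?G y) * (\<Prod>y\<in>{V (r - 1)<..V r - 1}. ?G y)"
    unfolding er by (rule prod.union_disjoint) auto
  finally show ?thesis unfolding c1 c2 r1 r2 by (simp only: ac_simps)
qed

end

context main
begin

lemma alphabar_mu: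
  assumes r: "1 \<le> r" "r \<le> d"
  shows "alphabar q t lam (lam_minus lam r) =
    (K 1 0 / K (XX r - XX (r - 1)) (YY r - YY r)) *
    (\<Prod>j\<in>{r<..d}. K (XX (j - 1) - XX (r - 1)) (YY j - YY r) / K (XX j - XX (r - 1)) (YY j - YY r)) *
    (\<Prod>j\<in>{0<..<r}. K (XX (r - 1) - XX (j - 1)) (YY r - YY j) / K (XX (r - 1) - XX (j - 1)) (YY r - YY (j - 1))) *
    (K 0 1 / K (XX (r - 1) - XX (r - 1)) (YY r - YY (r - 1)))"
proof -
  interpret ac: addcell "lam_minus lam r" lam "U r" "V r" by (rule addcell_minus[OF r])
  have sr: "Suc (r - 1) = r" using r by simp
  let ?F = "\<lambda>x. K (int (U r) - int x) (int (conjp (lam_minus lam r) x) - int (V r)) /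
                K (int (U r) - int x + 1) (int (conjp (lam_minus lam r) x) - int (V r))"
  let ?G = "\<lambda>y. K (int (prt (lam_minus lam r) y) - int (U r)) (int (V r) - int y) /
                K (int (prt (lam_minus lam r) y) - int (U r)) (int (V r) - int y + 1)"
  have cj: "conjp (lam_minus lam r) x = conjp lam x" if "x < U r" for x
    using ac.conj_rh[of x] that by simp
  have pj: "prt (lam_minus lam r) y = prt lam y" if "y < V r" for y
    using ac.hrh[of y] that by simp
  have ec: "{0<..<U r} = {0<..U (Suc r)} \<union> {U (Suc r)<..U r - 1}" using U_r_Suc[OF r] by auto
  have er: "{0<..<V r} = {0<..V (r - 1)} \<union> {V (r - 1)<..V r - 1}" using V_strict[of r] r by auto
  have c1: "(\<Prod>x\<in>{0<..U (Suc r)}. ?F x) =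
    (\<Prod>j\<in>{r<..d}. K (XX (j - 1) - XX (r - 1)) (YY j - YY r) / K (XX j - XX (r - 1)) (YY j - YY r))"
  proof -
    have "(\<Prod>x\<in>{0<..U (Suc r)}. ?F x) =
      (\<Prod>j\<in>{r<..d}. K (int (U r) - int (U j)) (int (V j) - int (V r)) /
                     K (int (U r) - int (U (Suc j))) (int (V j) - int (V r)))"
    proof (rule col_prod[OF r(2)])
      fix j x assume jx: "r < j" "j \<le> d" "U (Suc j) < x" "x \<le> U j"
      have "U j < U r" using U_lt[of r j] jx r by simp
      then have c: "conjp (lam_minus lam r) x = V j"
        using cj[of x] conjp_block[of x j] jx by simp
      show "?F x = K (int (U r) - int x) (int (V j) - int (V r)) /
            K (int (U r) - int (x - 1)) (int (V j) - int (V r))"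
        using jx by (simp add: c of_nat_diff algebra_simps)
    next
      fix j x assume jx: "r < j" "j \<le> d" "U (Suc j) \<le> x" "x \<le> U j"
      have "V r < V j" using V_lt jx by simp
      then show "K (int (U r) - int x) (int (V j) - int (V r)) \<noteq> 0"
        by (intro brk_nz) auto
    qed
    also have "\<dots> = (\<Prod>j\<in>{r<..d}. K (XX (j - 1) - XX (r - 1)) (YY j - YY r) / K (XX j - XX (r - 1)) (YY j - YY r))"
      by (rule prod.cong[OF refl]) (use r in \<open>auto simp: XX_def YY_def algebra_simps\<close>)
    finally show ?thesis .
  qed
  have c2: "(\<Prod>x\<in>{U (Suc r)<..U r - 1}. ?F x) = K 1 0 / K (XX r - XX (r - 1)) (YY r - YY r)"
  proof -
    have "(\<Prod>x\<in>{U (Suc r)<..U r - 1}. ?F x) = (\<Prod>x\<in>{U (Suc r)<..U r - 1}. K (int (U r) - int x) 0 / K (int (U r) - int (x - 1)) 0)"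
    proof (rule prod.cong[OF refl])
      fix x assume x: "x \<in> {U (Suc r)<..U r - 1}"
      have c: "conjp (lam_minus lam r) x = V r"
        using cj[of x] conjp_block[of x r] x r by auto
      show "?F x = K (int (U r) - int x) 0 / K (int (U r) - int (x - 1)) 0"
        using x by (simp add: c of_nat_diff algebra_simps)
    qed
    also have "\<dots> = K (int (U r) - int (U r - 1)) 0 / K (int (U r) - int (U (Suc r))) 0"
      by (rule tele[where H="\<lambda>x. K (int (U r) - int x) 0"]) (use U_r_Suc[OF r] U_pos[OF r] in \<open>auto simp: brk_nz\<close>)
    also have "\<dots> = K 1 0 / K (XX r - XX (r - 1)) (YY r - YY r)"
      using U_pos[OF r] sr by (simp add: XX_def of_nat_diff algebra_simps)
    finally show ?thesis .
  qed
  have r1: "(\<Prod>y\<in>{0<..V (r - 1)}. ?G y) =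
    (\<Prod>j\<in>{0<..<r}. K (XX (r - 1) - XX (j - 1)) (YY r - YY j) / K (XX (r - 1) - XX (j - 1)) (YY r - YY (j - 1)))"
  proof -
    have "(\<Prod>y\<in>{0<..V (r - 1)}. ?G y) =
      (\<Prod>j\<in>{0<..r - 1}. K (int (U j) - int (U r)) (int (V r) - int (V j)) /
                     K (int (U j) - int (U r)) (int (V r) - int (V (j - 1))))"
    proof (rule row_prod)
      show "r - 1 \<le> d" using r by simp
      fix j y assume jy: "0 < j" "j \<le> r - 1" "V (j - 1) < y" "y \<le> V j"
      have "V j < V r" using V_lt[of j r] jy r by simp
      then have p: "prt (lam_minus lam r) y = U j"
        using pj[of y] prt_block[of j y] jy r by simp
      show "?G y = K (int (U j) - int (U r)) (int (V r) - int y) /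
            K (int (U j) - int (U r)) (int (V r) - int (y - 1))"
        using jy by (simp add: p of_nat_diff algebra_simps)
    next
      fix j y assume jy: "0 < j" "j \<le> r - 1" "V (j - 1) \<le> y" "y \<le> V j"
      have "U r < U j" using U_lt[of j r] jy r by simp
      then show "K (int (U j) - int (U r)) (int (V r) - int y) \<noteq> 0"
        by (intro brk_nz) auto
    qed
    also have "\<dots> = (\<Prod>j\<in>{0<..<r}. K (XX (r - 1) - XX (j - 1)) (YY r - YY j) / K (XX (r - 1) - XX (j - 1)) (YY r - YY (j - 1)))"
    proof -
      have "{0<..r - 1} = {0<..<r}" using r by auto
      then show ?thesis
        by (intro prod.cong) (use r sr in \<open>auto simp: XX_def YY_def algebra_simps\<close>)
    qed
    finally show ?thesis .
  qed
  have r2: "(\<Prod>y\<in>{V (r - 1)<..V r - 1}. ?G y) = K 0 1 / K (XX (r - 1) - XX (r - 1)) (YY r - YY (r - 1))"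
  proof -
    have vv: "V (r - 1) < V r" using V_strict[of r] r by simp
    have "(\<Prod>y\<in>{V (r - 1)<..V r - 1}. ?G y) = (\<Prod>y\<in>{V (r - 1)<..V r - 1}. K 0 (int (V r) - int y) / K 0 (int (V r) - int (y - 1)))"
    proof (rule prod.cong[OF refl])
      fix y assume y: "y \<in> {V (r - 1)<..V r - 1}"
      have p: "prt (lam_minus lam r) y = U r"
        using pj[of y] prt_block[of r y] y r by auto
      show "?G y = K 0 (int (V r) - int y) / K 0 (int (V r) - int (y - 1))"
        using y by (simp add: p of_nat_diff algebra_simps)
    qed
    also have "\<dots> = K 0 (int (V r) - int (V r - 1)) / K 0 (int (V r) - int (V (r - 1)))"
      by (rule tele[where H="\<lambda>y. K 0 (int (V r) - int y)"]) (use vv in \<open>auto simp: brk_nz\<close>)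
    also have "\<dots> = K 0 1 / K (XX (r - 1) - XX (r - 1)) (YY r - YY (r - 1))"
      using vv by (simp add: YY_def of_nat_diff algebra_simps)
    finally show ?thesis .
  qed
  have "alphabar q t lam (lam_minus lam r) = (\<Prod>x\<in>{0<..<U r}. ?F x) * (\<Prod>y\<in>{0<..<V r}. ?G y)"
    by (rule ac.alphabar_eq)
  also have "(\<Prod>x\<in>{0<..<U r}. ?F x) = (\<Prod>x\<in>{0<..U (Suc r)}. ?F x) * (\<Prod>x\<in>{U (Suc r)<..U r - 1}. ?F x)"
    unfolding ec by (rule prod.union_disjoint) auto
  also have "(\<Prod>y\<in>{0<..<V r}. ?G y) = (\<Prod>y\<in>{0<..V (r - 1)}. ?G y) * (\<Prod>y\<in>{V (r - 1)<..V r - 1}. ?G y)"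
    unfolding er by (rule prod.union_disjoint) auto
  finally show ?thesis unfolding c1 c2 r1 r2 by (simp only: ac_simps)
qed

end

lemma final_alg:
  fixes anu amu g tp tps Q c nr PA PB PC PD w e1 e2 :: "'a::field"
  assumes h1: "tps * anu = - e2 * PC / PB"
    and h2: "amu = - (w * Q * c * PD) / (e1 * PA)"
    and h3: "g = (e1 / c) * (e2 / nr) / w"
    and h4: "tp * nr = Q * tps"
    and nz: "tps \<noteq> 0" "Q \<noteq> 0" "c \<noteq> 0" "nr \<noteq> 0" "w \<noteq> 0" "e1 \<noteq> 0" "e2 \<noteq> 0"
      "PA \<noteq> 0" "PB \<noteq> 0" "PD \<noteq> 0"
  shows "tp * anu * (1 / amu) / g = PA / PB * (PC / PD)"
proof -
  have a: "anu = - e2 * PC / (PB * tps)" using h1 nz by (simp add: field_simps)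
  have b: "tp = Q * tps / nr" using h4 nz by (simp add: field_simps)
  show ?thesis unfolding a b h2 h3 using nz by (simp add: field_simps)
qed

lemma final_alg_bar:
  fixes anu amu g tp tps Q nr PA PB PC PD w e1 e2 :: "'a::field"
  assumes h1: "tps * anu = - e1 * PC / PB"
    and h2: "amu = - (w * Q * nr * PD) / (e2 * PA)"
    and h3: "g = (e1 / nr) * (e2 / nr) / w"
    and h4: "tp * nr = Q * tps"
    and nz: "tps \<noteq> 0" "Q \<noteq> 0" "nr \<noteq> 0" "w \<noteq> 0" "e1 \<noteq> 0" "e2 \<noteq> 0"
      "PA \<noteq> 0" "PB \<noteq> 0" "PD \<noteq> 0"
  shows "tp * anu * (1 / amu) / g = PA / PB * (PC / PD)"
proof -
  have a: "anu = - e1 * PC / (PB * tps)" using h1 nz by (simp add: field_simps)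
  have b: "tp = Q * tps / nr" using h4 nz by (simp add: field_simps)
  show ?thesis unfolding a b h2 h3 using nz by (simp add: field_simps)
qed

context qt
begin

lemma Amu_form:
  fixes X Y :: "nat \<Rightarrow> int"
  assumes r: "1 \<le> r" "r \<le> d" and Y0: "Y 0 = 0"
    and nz1: "M a b \<noteq> M (X r) (Y r)" and nz2: "M a b \<noteq> M (X (r - 1)) (Y (r - 1))"
  shows "(k1 / K (X r - a) (Y r - b)) *
    (\<Prod>i\<in>{r<..d}. K (X (i - 1) - a) (Y i - b) / K (X i - a) (Y i - b)) *
    (\<Prod>i\<in>{0<..<r}. K (a - X (i - 1)) (b - Y i) / K (a - X (i - 1)) (b - Y (i - 1))) *
    (k2 / K (a - X (r - 1)) (b - Y (r - 1))) =
    - (k1 * k2) * M (X (r - 1)) 0 * M a b *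
      ((\<Prod>i\<in>{1..d} - {r}. M a b - M (X (i - 1)) (Y i)) / (\<Prod>i\<in>{0..d}. M a b - M (X i) (Y i)))"
proof -
  define P where "P = M a b"
  define mr where "mr = M (X r) (Y r)"
  define mr1 where "mr1 = M (X (r - 1)) (Y (r - 1))"
  define hi where "hi = (\<Prod>i\<in>{r<..d}. K (X (i - 1) - a) (Y i - b) / K (X i - a) (Y i - b))"
  define lo where "lo = (\<Prod>i\<in>{0<..<r}. K (a - X (i - 1)) (b - Y i) / K (a - X (i - 1)) (b - Y (i - 1)))"
  define M0 where "M0 = M 0 (Y (r - 1))"
  define Q where "Q = M (X (r - 1)) 0"
  define D1 where "D1 = P - mr"
  define D2 where "D2 = mr1 - P"
  have P0: "P \<noteq> 0" "M0 \<noteq> 0" "Q \<noteq> 0" unfolding P_def M0_def Q_def by simp_all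
  have n1: "D1 \<noteq> 0" "D2 \<noteq> 0" using nz1 nz2 unfolding P_def mr_def mr1_def D1_def D2_def by auto
  have mm: "mr1 = Q * M0" unfolding mr1_def Q_def M0_def by (simp add: mon_mult)
  have k1: "K (X r - a) (Y r - b) = D1 / P"
    using mon_diff[of a b "X r" "Y r"] P0 unfolding P_def mr_def D1_def by (simp add: field_simps)
  have mr10: "mr1 \<noteq> 0" unfolding mr1_def by simp
  have k2': "K (a - X (r - 1)) (b - Y (r - 1)) = D2 / mr1"
    using mon_diff[of "X (r - 1)" "Y (r - 1)" a b] mr10 unfolding P_def mr1_def D2_def by (simp add: field_simps)
  have k2: "K (a - X (r - 1)) (b - Y (r - 1)) = D2 / (Q * M0)" unfolding k2' mm ..
  have R2: "(\<Prod>i\<in>{1..d} - {r}. P - M (X (i - 1)) (Y i)) / (\<Prod>i\<in>{0..d}. P - M (X i) (Y i)) =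
     hi * (M0 * lo) / ((- D2) * D1)"
  proof -
    have "P - mr1 = - D2" unfolding D2_def by simp
    then show ?thesis
      using R2_form[OF r, of a b X Y] Y0 unfolding hi_def lo_def P_def mr_def mr1_def M0_def D1_def by simp
  qed
  show ?thesis
    unfolding R2 hi_def[symmetric] lo_def[symmetric] P_def[symmetric] k1 k2 Q_def[symmetric]
    using P0 n1 by (simp add: field_simps)
qed

lemma one_minus_mon: "x \<noteq> 0 \<Longrightarrow> x * M a b = y \<Longrightarrow> 1 - M a b = (x - y) / x"
  by (simp add: field_simps)

lemma K01: "K 0 1 = 1 - t" unfolding brk_def mon_def by simp
lemma K10: "K 1 0 = 1 - q" unfolding brk_def mon_def by simp

end

context main
begin

lemma XX_lt: "i < j \<Longrightarrow> j \<le> d \<Longrightarrow> XX i < XX j"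
  using U_lt[of "Suc i" "Suc j"] unfolding XX_def by simp

lemma YY_lt: "i < j \<Longrightarrow> j \<le> d \<Longrightarrow> YY i < YY j"
  using V_lt[of i j] unfolding YY_def by simp

lemma XX_less_iff: "i \<le> d \<Longrightarrow> j \<le> d \<Longrightarrow> XX i < XX j \<longleftrightarrow> i < j"
  using XX_lt[of i j] XX_lt[of j i] by (cases i j rule: linorder_cases) auto

lemma YY_less_iff: "i \<le> d \<Longrightarrow> j \<le> d \<Longrightarrow> YY i < YY j \<longleftrightarrow> i < j"
  using YY_lt[of i j] YY_lt[of j i] by (cases i j rule: linorder_cases) auto

lemma XX_eq_iff: "i \<le> d \<Longrightarrow> j \<le> d \<Longrightarrow> XX i = XX j \<longleftrightarrow> i = j"
  using XX_lt[of i j] XX_lt[of j i] by (cases i j rule: linorder_cases) auto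

lemma YY_eq_iff: "i \<le> d \<Longrightarrow> j \<le> d \<Longrightarrow> YY i = YY j \<longleftrightarrow> i = j"
  using YY_lt[of i j] YY_lt[of j i] by (cases i j rule: linorder_cases) auto

lemma nz_m_m: "i \<le> d \<Longrightarrow> j \<le> d \<Longrightarrow> i \<noteq> j \<Longrightarrow> M (XX i) (YY i) \<noteq> M (XX j) (YY j)"
  by (simp add: mon_eq_iff YY_eq_iff)

lemma nz_c_m:
  assumes "1 \<le> r" "r \<le> d" "i \<le> d"
  shows "M (XX (r - 1) + 1) (YY r - 1) \<noteq> M (XX i) (YY i)"
proof
  assume "M (XX (r - 1) + 1) (YY r - 1) = M (XX i) (YY i)"
  then have e: "XX (r - 1) + 1 = XX i" "YY r - 1 = YY i" by (simp_all add: mon_eq_iff)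
  then have "YY i < YY r" by simp
  then have "i < r" using YY_less_iff[of i r] assms by simp
  then have "\<not> XX (r - 1) < XX i" using XX_less_iff[of "r - 1" i] assms by simp
  then have "XX i \<le> XX (r - 1)" by simp
  then show False using e by simp
qed

lemma nz_n_m:
  assumes "1 \<le> r" "r \<le> d" "i \<le> d"
  shows "M (XX (r - 1)) (YY r) \<noteq> M (XX i) (YY i)"
proof
  assume "M (XX (r - 1)) (YY r) = M (XX i) (YY i)"
  then have e: "XX (r - 1) = XX i" "YY r = YY i" by (simp_all add: mon_eq_iff)
  then have "i = r - 1" "i = r" using XX_eq_iff[of "r - 1" i] YY_eq_iff[of r i] assms by auto
  then show False using assms by simp
qed

lemma nz_c_n:
  assumes "1 \<le> r" "r \<le> d" "1 \<le> i" "i \<le> d" "i \<noteq> r"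
  shows "M (XX (r - 1) + 1) (YY r - 1) \<noteq> M (XX (i - 1)) (YY i)"
proof
  assume "M (XX (r - 1) + 1) (YY r - 1) = M (XX (i - 1)) (YY i)"
  then have e: "XX (r - 1) + 1 = XX (i - 1)" "YY r - 1 = YY i" by (simp_all add: mon_eq_iff)
  then have "YY i < YY r" by simp
  then have "i < r" using YY_less_iff[of i r] assms by simp
  then have "XX (i - 1) < XX (r - 1)" using XX_less_iff[of "i - 1" "r - 1"] assms by simp
  then show False using e by simp
qed

lemma nz_n_n:
  assumes "1 \<le> r" "r \<le> d" "1 \<le> i" "i \<le> d" "i \<noteq> r"
  shows "M (XX (r - 1)) (YY r) \<noteq> M (XX (i - 1)) (YY i)"
  using assms by (simp add: mon_eq_iff YY_eq_iff)

lemma nz_mb_m: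
  assumes "s \<le> d" "i \<le> d" "i \<noteq> s"
  shows "M (XX s - 1) (YY s + 1) \<noteq> M (XX i) (YY i)"
proof
  assume "M (XX s - 1) (YY s + 1) = M (XX i) (YY i)"
  then have e: "XX s - 1 = XX i" "YY s + 1 = YY i" by (simp_all add: mon_eq_iff)
  then have "YY s < YY i" by simp
  then have "s < i" using YY_less_iff[of s i] assms by simp
  then have "XX s < XX i" using XX_less_iff[of s i] assms by simp
  then show False using e by simp
qed

lemma nz_n_mb:
  assumes "1 \<le> r" "r \<le> d" "s \<le> d"
  shows "M (XX (r - 1)) (YY r) \<noteq> M (XX s - 1) (YY s + 1)"
proof
  assume "M (XX (r - 1)) (YY r) = M (XX s - 1) (YY s + 1)"
  then have e: "XX (r - 1) = XX s - 1" "YY r = YY s + 1" by (simp_all add: mon_eq_iff)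
  then have "YY s < YY r" by simp
  then have "s < r" using YY_less_iff[of s r] assms by simp
  then have "\<not> XX (r - 1) < XX s" using XX_less_iff[of "r - 1" s] assms by simp
  then have "XX s \<le> XX (r - 1)" by simp
  then show False using e by simp
qed

lemma nn_skew_minus: "1 \<le> r \<Longrightarrow> r \<le> d \<Longrightarrow> nn_skew lam (lam_minus lam r) = YY r - 1"
proof -
  assume r: "1 \<le> r" "r \<le> d"
  interpret ac: addcell "lam_minus lam r" lam "U r" "V r" by (rule addcell_minus[OF r])
  show ?thesis using ac.nn_skew_eq by (simp add: YY_def)
qed

lemma nn'_skew_minus: "1 \<le> r \<Longrightarrow> r \<le> d \<Longrightarrow> nn'_skew lam (lam_minus lam r) = int (U r) - 1"
proof -
  assume r: "1 \<le> r" "r \<le> d"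
  interpret ac: addcell "lam_minus lam r" lam "U r" "V r" by (rule addcell_minus[OF r])
  show ?thesis using ac.nn'_skew_eq by simp
qed

lemma Aexp_eq: "1 \<le> r \<Longrightarrow> r \<le> d \<Longrightarrow> s \<le> d \<Longrightarrow>
    Aexp (lam_plus lam s) lam (lam_minus lam r) = XX s - XX (r - 1) - 1"
  unfolding Aexp_def by (simp add: nn_skew_minus nn'_skew_minus nn'_skew_plus XX_def)

lemma Bexp_eq: "1 \<le> r \<Longrightarrow> r \<le> d \<Longrightarrow> s \<le> d \<Longrightarrow>
    Bexp (lam_plus lam s) lam (lam_minus lam r) = YY s - YY r + 1"
  unfolding Bexp_def by (simp add: nn_skew_minus nn_skew_plus)

end

context main
begin

lemma prod_nz: "finite A \<Longrightarrow> (\<And>i. i \<in> A \<Longrightarrow> f i \<noteq> (0::'a)) \<Longrightarrow> prod f A \<noteq> 0"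
  by (simp add: prod_zero_iff)

lemma w_nz: "K 0 1 * K 1 0 \<noteq> 0"
  using q1 t1 by (simp add: K01 K10)

lemma pp_r:
  assumes r: "1 \<le> r" "r \<le> d" and s: "s \<le> d"
  shows "pp q t lam r s =
    (\<Prod>i\<in>{0..d} - {s}. (M (XX (r - 1) + 1) (YY r - 1) - M (XX i) (YY i)) / (M (XX s) (YY s) - M (XX i) (YY i))) *
    (\<Prod>i\<in>{1..d} - {r}. (M (XX s) (YY s) - M (XX (i - 1)) (YY i)) / (M (XX (r - 1) + 1) (YY r - 1) - M (XX (i - 1)) (YY i)))"
proof -
  define c where "c = M (XX (r - 1) + 1) (YY r - 1)"
  define ms where "ms = M (XX s) (YY s)"
  define nr where "nr = M (XX (r - 1)) (YY r)"
  define PA where "PA = (\<Prod>i\<in>{0..d} - {s}. c - M (XX i) (YY i))"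
  define PB where "PB = (\<Prod>i\<in>{0..d} - {s}. ms - M (XX i) (YY i))"
  define PC where "PC = (\<Prod>i\<in>{1..d} - {r}. ms - M (XX (i - 1)) (YY i))"
  define PD where "PD = (\<Prod>i\<in>{1..d} - {r}. c - M (XX (i - 1)) (YY i))"
  define w where "w = K 0 1 * K 1 0"
  define Q where "Q = M (XX (r - 1)) 0"
  define anu where "anu = alpha q t (lam_plus lam s) lam"
  define amu where "amu = alpha q t lam (lam_minus lam r)"
  define g where "g = gamma q t (lam_plus lam s) lam (lam_minus lam r)"
  define tp where "tp = t powi (Bexp (lam_plus lam s) lam (lam_minus lam r) - 1)"
  define tps where "tps = t powi (YY s)"
  have r0: "r \<noteq> 0" using r by simp
  have lhs: "pp q t lam r s = tp * anu * (1 / amu) / g"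
    unfolding pp_def P2_def beta_def tp_def anu_def amu_def g_def using r0 by simp
  have rhs: "(\<Prod>i\<in>{0..d} - {s}. (M (XX (r - 1) + 1) (YY r - 1) - M (XX i) (YY i)) / (M (XX s) (YY s) - M (XX i) (YY i))) *
    (\<Prod>i\<in>{1..d} - {r}. (M (XX s) (YY s) - M (XX (i - 1)) (YY i)) / (M (XX (r - 1) + 1) (YY r - 1) - M (XX (i - 1)) (YY i)))
    = PA / PB * (PC / PD)"
    unfolding PA_def PB_def PC_def PD_def c_def ms_def by (simp add: prod_dividef)
  have h1: "tps * anu = - (nr - ms) * PC / PB"
  proof -
    have "tps * anu = pp q t lam 0 s"
      unfolding pp_def P1_def tps_def anu_def nn_skew_plus[OF s] by simp
    also have "\<dots> = (\<Prod>i\<in>{1..d}. ms - M (XX (i - 1)) (YY i)) / PB"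
      unfolding pp0[OF s] ms_def PB_def ..
    also have "(\<Prod>i\<in>{1..d}. ms - M (XX (i - 1)) (YY i)) = (ms - nr) * PC"
      unfolding PC_def nr_def using r by (subst prod.remove[of _ r]) auto
    finally show ?thesis by simp
  qed
  have h2: "amu = - (w * Q * c * PD) / ((c - ms) * PA)"
  proof -
    have "amu = - (K 0 1 * K 1 0) * M (XX (r - 1)) 0 * M (XX (r - 1) + 1) (YY r - 1) *
      ((\<Prod>i\<in>{1..d} - {r}. M (XX (r - 1) + 1) (YY r - 1) - M (XX (i - 1)) (YY i)) /
       (\<Prod>i\<in>{0..d}. M (XX (r - 1) + 1) (YY r - 1) - M (XX i) (YY i)))"
      unfolding amu_def alpha_mu[OF r]
      by (rule Amu_form[OF r]) (use nz_c_m r in auto)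
    also have "(\<Prod>i\<in>{0..d}. M (XX (r - 1) + 1) (YY r - 1) - M (XX i) (YY i)) = (c - ms) * PA"
      unfolding PA_def c_def ms_def using s by (subst prod.remove[of _ s]) auto
    finally show ?thesis unfolding w_def Q_def c_def[symmetric] PD_def[symmetric] by simp
  qed
  have h3: "g = ((c - ms) / c) * ((nr - ms) / nr) / w"
  proof -
    have a: "1 - M (XX s - XX (r - 1) - 1) (YY s - YY r + 1) = (c - ms) / c"
      by (rule one_minus_mon) (simp_all add: c_def ms_def mon_mult)
    have b: "1 - M (XX s - XX (r - 1) - 1 + 1) (YY s - YY r + 1 - 1) = (nr - ms) / nr"
      by (rule one_minus_mon) (simp_all add: nr_def ms_def mon_mult)
    have "(1 - q) * (1 - t) = w" unfolding w_def K01 K10 by simp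
    then show ?thesis unfolding g_def gamma_def Aexp_eq[OF r s] Bexp_eq[OF r s] a b by simp
  qed
  have h4: "tp * nr = Q * tps"
    unfolding tp_def nr_def Q_def tps_def Bexp_eq[OF r s] tpow by (simp add: mon_mult)
  have nzs: "tps \<noteq> 0" "Q \<noteq> 0" "c \<noteq> 0" "nr \<noteq> 0" "w \<noteq> 0" "c - ms \<noteq> 0" "nr - ms \<noteq> 0"
    unfolding tps_def Q_def c_def nr_def w_def ms_def tpow
    using w_nz nz_c_m[OF r s] nz_n_m[OF r s] by simp_all
  have nzP: "PA \<noteq> 0" "PB \<noteq> 0" "PD \<noteq> 0"
    unfolding PA_def PB_def PD_def c_def ms_def
    by (intro prod_nz; use nz_c_m[OF r] nz_m_m[of s] nz_c_n[OF r] s in auto)+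
  show ?thesis unfolding lhs rhs
    by (rule final_alg[OF h1 h2 h3 h4 nzs nzP])
qed

lemma ppbar_r:
  assumes r: "1 \<le> r" "r \<le> d" and s: "s \<le> d"
  shows "ppbar q t lam r s =
    (\<Prod>i\<in>{0..d} - {s}. (M (XX (r - 1)) (YY r) - M (XX i) (YY i)) / (M (XX s - 1) (YY s + 1) - M (XX i) (YY i))) *
    (\<Prod>i\<in>{1..d} - {r}. (M (XX s - 1) (YY s + 1) - M (XX (i - 1)) (YY i)) / (M (XX (r - 1)) (YY r) - M (XX (i - 1)) (YY i)))"
proof -
  define mbs where "mbs = M (XX s - 1) (YY s + 1)"
  define ms where "ms = M (XX s) (YY s)"
  define nr where "nr = M (XX (r - 1)) (YY r)"
  define PA where "PA = (\<Prod>i\<in>{0..d} - {s}. nr - M (XX i) (YY i))"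
  define PB where "PB = (\<Prod>i\<in>{0..d} - {s}. mbs - M (XX i) (YY i))"
  define PC where "PC = (\<Prod>i\<in>{1..d} - {r}. mbs - M (XX (i - 1)) (YY i))"
  define PD where "PD = (\<Prod>i\<in>{1..d} - {r}. nr - M (XX (i - 1)) (YY i))"
  define w where "w = K 0 1 * K 1 0"
  define Q where "Q = M (XX (r - 1)) 0"
  define anu where "anu = alphabar q t (lam_plus lam s) lam"
  define amu where "amu = alphabar q t lam (lam_minus lam r)"
  define g where "g = gamma q t (lam_plus lam s) lam (lam_minus lam r)"
  define tp where "tp = t powi (Bexp (lam_plus lam s) lam (lam_minus lam r) - 1)"
  define tps where "tps = t powi (YY s)"
  have r0: "r \<noteq> 0" using r by simp
  have lhs: "ppbar q t lam r s = tp * anu * (1 / amu) / g"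
    unfolding ppbar_def P2bar_def betabar_def tp_def anu_def amu_def g_def using r0 by simp
  have rhs: "(\<Prod>i\<in>{0..d} - {s}. (M (XX (r - 1)) (YY r) - M (XX i) (YY i)) / (M (XX s - 1) (YY s + 1) - M (XX i) (YY i))) *
    (\<Prod>i\<in>{1..d} - {r}. (M (XX s - 1) (YY s + 1) - M (XX (i - 1)) (YY i)) / (M (XX (r - 1)) (YY r) - M (XX (i - 1)) (YY i)))
    = PA / PB * (PC / PD)"
    unfolding PA_def PB_def PC_def PD_def nr_def mbs_def by (simp add: prod_dividef)
  have h1: "tps * anu = - (nr - mbs) * PC / PB"
  proof -
    have "tps * anu = ppbar q t lam 0 s"
      unfolding ppbar_def P1bar_def tps_def anu_def nn_skew_plus[OF s] by simp
    also have "\<dots> = (\<Prod>i\<in>{1..d}. mbs - M (XX (i - 1)) (YY i)) / PB"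
      unfolding ppbar0[OF s] mbs_def PB_def ..
    also have "(\<Prod>i\<in>{1..d}. mbs - M (XX (i - 1)) (YY i)) = (mbs - nr) * PC"
      unfolding PC_def nr_def using r by (subst prod.remove[of _ r]) auto
    finally show ?thesis by simp
  qed
  have h2: "amu = - (w * Q * nr * PD) / ((nr - ms) * PA)"
  proof -
    have "amu = - (K 1 0 * K 0 1) * M (XX (r - 1)) 0 * M (XX (r - 1)) (YY r) *
      ((\<Prod>i\<in>{1..d} - {r}. M (XX (r - 1)) (YY r) - M (XX (i - 1)) (YY i)) /
       (\<Prod>i\<in>{0..d}. M (XX (r - 1)) (YY r) - M (XX i) (YY i)))"
      unfolding amu_def alphabar_mu[OF r]
      by (rule Amu_form[OF r]) (use nz_n_m r in auto)
    also have "(\<Prod>i\<in>{0..d}. M (XX (r - 1)) (YY r) - M (XX i) (YY i)) = (nr - ms) * PA"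
      unfolding PA_def nr_def ms_def using s by (subst prod.remove[of _ s]) auto
    finally show ?thesis unfolding w_def Q_def nr_def[symmetric] PD_def[symmetric] by (simp add: ac_simps)
  qed
  have h3: "g = ((nr - mbs) / nr) * ((nr - ms) / nr) / w"
  proof -
    have a: "1 - M (XX s - XX (r - 1) - 1) (YY s - YY r + 1) = (nr - mbs) / nr"
      by (rule one_minus_mon) (simp_all add: nr_def mbs_def mon_mult)
    have b: "1 - M (XX s - XX (r - 1) - 1 + 1) (YY s - YY r + 1 - 1) = (nr - ms) / nr"
      by (rule one_minus_mon) (simp_all add: nr_def ms_def mon_mult)
    have "(1 - q) * (1 - t) = w" unfolding w_def K01 K10 by simp
    then show ?thesis unfolding g_def gamma_def Aexp_eq[OF r s] Bexp_eq[OF r s] a b by simp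
  qed
  have h4: "tp * nr = Q * tps"
    unfolding tp_def nr_def Q_def tps_def Bexp_eq[OF r s] tpow by (simp add: mon_mult)
  have nzs: "tps \<noteq> 0" "Q \<noteq> 0" "nr \<noteq> 0" "w \<noteq> 0" "nr - mbs \<noteq> 0" "nr - ms \<noteq> 0"
    unfolding tps_def Q_def nr_def w_def ms_def mbs_def tpow
    using w_nz nz_n_mb[OF r s] nz_n_m[OF r s] by simp_all
  have nzP: "PA \<noteq> 0" "PB \<noteq> 0" "PD \<noteq> 0"
    unfolding PA_def PB_def PD_def nr_def mbs_def
    by (intro prod_nz; use nz_n_m[OF r] nz_mb_m[OF s] nz_n_n[OF r] s in auto)+
  show ?thesis unfolding lhs rhs
    by (rule final_alg_bar[OF h1 h2 h3 h4 nzs nzP])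
qed

end


theorem proposition4p20:
  fixes lam :: "nat list" and q t :: "'a::field"
  assumes "is_partition lam"
    and "q \<noteq> 0" and "t \<noteq> 0"
    and indep: "\<And>a b :: int. q powi a * t powi b = 1 \<Longrightarrow> a = 0 \<and> b = 0"
  defines "d \<equiv> ndist lam"
    and "X \<equiv> xs lam" and "Y \<equiv> ys lam"
  shows
   "(\<forall>s\<le>d.
      pp q t lam 0 s =
        (\<Prod>i\<in>{1..d}. mon q t (X s) (Y s) - mon q t (X (i - 1)) (Y i)) /
        (\<Prod>i\<in>{0..d} - {s}. mon q t (X s) (Y s) - mon q t (X i) (Y i))
    \<and> ppbar q t lam 0 s =
        (\<Prod>i\<in>{1..d}. mon q t (X s - 1) (Y s + 1) - mon q t (X (i - 1)) (Y i)) /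
        (\<Prod>i\<in>{0..d} - {s}. mon q t (X s - 1) (Y s + 1) - mon q t (X i) (Y i)))
  \<and> (\<forall>r\<in>{1..d}. \<forall>s\<le>d.
      pp q t lam r s =
        (\<Prod>i\<in>{0..d} - {s}. (mon q t (X (r - 1) + 1) (Y r - 1) - mon q t (X i) (Y i)) /
                             (mon q t (X s) (Y s) - mon q t (X i) (Y i))) *
        (\<Prod>i\<in>{1..d} - {r}. (mon q t (X s) (Y s) - mon q t (X (i - 1)) (Y i)) /
                             (mon q t (X (r - 1) + 1) (Y r - 1) - mon q t (X (i - 1)) (Y i)))
    \<and> ppbar q t lam r s =
        (\<Prod>i\<in>{0..d} - {s}. (mon q t (X (r - 1)) (Y r) - mon q t (X i) (Y i)) /
                             (mon q t (X s - 1) (Y s + 1) - mon q t (X i) (Y i))) *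
        (\<Prod>i\<in>{1..d} - {r}. (mon q t (X s - 1) (Y s + 1) - mon q t (X (i - 1)) (Y i)) /
                             (mon q t (X (r - 1)) (Y r) - mon q t (X (i - 1)) (Y i))))"
  proof -
  interpret main lam q t
    by unfold_locales (use assms in auto)
  have XE: "X = XX" unfolding X_def by (rule ext) (simp add: xs_u XX_def)
  have YE: "Y = YY" unfolding Y_def by (rule ext) (simp add: ys_VV YY_def)
  show ?thesis unfolding XE YE d_def using pp0 ppbar0 pp_r ppbar_r by auto
qed

end
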